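(* Let $\mathcal{H}$ be a real Hilbert space, $N\ge2$, $\theta\in(0,1)$, and $\Gamma\subseteq\mathbb{R}_{++}$ a nonempty closed interval. Suppose one of the following holds: (a) $A_1,\dots,A_{N-1}:\mathcal{H}\to\mathcal{H}$ are monotone and $L$-Lipschitz, and $A_N:\mathcal{H}\rightrightarrows\mathcal{H}$ is maximally $\mu$-strongly monotone; (b) $A_1,\dots,A_{N-1}:\mathcal{H}\to\mathcal{H}$ are maximally $\mu$-strongly monotone and $L$-Lipschitz, and $A_N:\mathcal{H}\rightrightarrows\mathcal{H}$ is maximally monotone. Assume $\operatorname{zer}(\sum_{i=1}^NA_i)\neq\emptyset$, let $(\gamma_n)_{n\in\mathbb{N}}\subseteq\Gamma$ converge $R$-linearly to $\gamma^*\in\Gamma$, and let $T_\gamma$ be the Malitsky--Tam operator (context). Given $\mathbf{x}_0=(x_0^1,\dots,x_0^{N-1})\in\mathcal{H}^{N-1}$, generate $(\mathbf{x}_n),(\mathbf{w}_n)\subseteq\mathcal{H}^{N-1}$ and $(\mathbf{z}_n)=((z_n^1,\dots,z_n^N))\subseteq\mathcal{H}^N$ by the relocated resolvent splitting algorithm described in the context. Then: (i) $(\mathbf{x}_n)$ and $(\mathbf{w}_n)$ converge $R$-linearly to the same point $\mathbf{x}=(x^1,\dots,x^{N-1})\in\operatorname{Fix}T_{\gamma^*}$; (ii) $(\mathbf{z}_n)$ converges $R$-linearly to $(z,\dots,z)\in\mathcal{H}^N$, where $z:=J_{\gamma^*A_1}x^1\in\operatorname{zer}(\sum_{i=1}^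NA_i)$.
   Context: $J_A=(\mathrm{Id}+A)^{-1}$; $\operatorname{zer}A=\{x:0\in Ax\}$; $\operatorname{Fix}T=\{x:Tx=x\}$; $\mu$-strongly monotone means $\langle x-y,u-v\rangle\ge\mu\|x-y\|^2$ on the graph. Malitsky--Tam operator: for $\mathbf{x}=(x^1,\dots,x^{N-1})$, $z^1=J_{\gamma A_1}x^1$, $z^i=J_{\gamma A_i}(z^{i-1}+x^i-x^{i-1})$ ($i=2,\dots,N-1$), $z^N=J_{\gamma A_N}(z^1+z^{N-1}-x^{N-1})$, $T_\gamma\mathbf{x}=\mathbf{x}+\theta(z^2-z^1,\dots,z^N-z^{N-1})$. Relocated algorithm: set $z_0^1=J_{\gamma_0A_1}x_0^1$. For $n=0,1,\dots$: compute $z_n^i=J_{\gamma_nA_i}(x_n^i+z_n^{i-1}-x_n^{i-1})$ for $i=2,\dots,N-1$ and $z_n^N=J_{\gamma_nA_N}(z_n^1+z_n^{N-1}-x_n^{N-1})$; set $\mathbf{w}_n=\mathbf{x}_n+\theta(z_n^2-z_n^1,\dots,z_n^N-z_n^{N-1})$; then $z_{n+1}^1=J_{\gamma_nA_1}w_n^1$, $x_{n+1}^1=\frac{\gamma_{n+1}}{\gamma_n}w_n^1+(1-\frac{\gamma_{n+1}}{\gamma_n})z_{n+1}^1$, and $x_{n+1}^i=\frac{\gamma_{n+1}}{\gamma_n}(w_n^i-w_n^1)+x_{n+1}^1$ for $i=2,\dots,N-1$. A sequence converges $R$-linearly to $a$ if $\|a_n-a\|\le Cr^n$ for some $C\ge0$,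 $r\in(0,1)$. *)

theory Defs
  imports "HOL-Analysis.Analysis"
begin

definition monotone_op :: "('a::real_inner \<Rightarrow> 'a set) \<Rightarrow> bool" where
  "monotone_op A \<longleftrightarrow> (\<forall>x y u v. u \<in> A x \<longrightarrow> v \<in> A y \<longrightarrow> inner (x - y) (u - v) \<ge> 0)"

definition strongly_monotone_op :: "real \<Rightarrow> ('a::real_inner \<Rightarrow> 'a set) \<Rightarrow> bool" where
  "strongly_monotone_op \<mu> A \<longleftrightarrow>
     (\<forall>x y u v. u \<in> A x \<longrightarrow> v \<in> A y \<longrightarrow> inner (x - y) (u - v) \<ge> \<mu> * (norm (x - y))\<^sup>2)"

definition maximally_monotone_op :: "('a::real_inner \<Rightarrow> 'a set) \<Rightarrow> bool" where
  "maximally_monotone_op A \<longleftrightarrow> monotone_op A \<and>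
     (\<forall>B. monotone_op B \<and> (\<forall>x. A x \<subseteq> B x) \<longrightarrow> B = A)"

definition sv :: "('a \<Rightarrow> 'a) \<Rightarrow> 'a \<Rightarrow> 'a set" where
  "sv f = (\<lambda>x. {f x})"

(* resolvent J_{g A} = (Id + g A)^{-1}, as a function (single-valued for maximally monotone A, g > 0) *)
definition resolvent :: "real \<Rightarrow> ('a::real_vector \<Rightarrow> 'a set) \<Rightarrow> 'a \<Rightarrow> 'a" where
  "resolvent g A y = (THE x. \<exists>u \<in> A x. y = x + g *\<^sub>R u)"

definition zer :: "('a::zero \<Rightarrow> 'a set) \<Rightarrow> 'a set" where
  "zer A = {x. 0 \<in> A x}"

definition opsum :: "nat \<Rightarrow> (nat \<Rightarrow> 'a \<Rightarrow> 'a set) \<Rightarrow> 'a::comm_monoid_add \<Rightarrow> 'a set" where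
  "opsum N A x = {(\<Sum>i=1..N. u i) | u. \<forall>i\<in>{1..N}. u i \<in> A i x}"

definition ops :: "nat \<Rightarrow> (nat \<Rightarrow> 'a \<Rightarrow> 'a) \<Rightarrow> ('a \<Rightarrow> 'a set) \<Rightarrow> nat \<Rightarrow> 'a \<Rightarrow> 'a set" where
  "ops N F B i = (if i = N then B else sv (F i))"

(* Malitsky--Tam operator. Vectors of H^{N-1} (resp. H^N) are functions nat \<Rightarrow> 'a,
   only indices 1..N-1 (resp. 1..N) being relevant. *)
fun mt_zz :: "(nat \<Rightarrow> 'a::real_vector \<Rightarrow> 'a set) \<Rightarrow> real \<Rightarrow> (nat \<Rightarrow> 'a) \<Rightarrow> nat \<Rightarrow> 'a" where
  "mt_zz A g x 0 = 0"
| "mt_zz A g x (Suc 0) = resolvent g (A 1) (x 1)"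
| "mt_zz A g x (Suc (Suc i)) =
     resolvent g (A (Suc (Suc i))) (mt_zz A g x (Suc i) + x (Suc (Suc i)) - x (Suc i))"

definition mt_z :: "nat \<Rightarrow> (nat \<Rightarrow> 'a::real_vector \<Rightarrow> 'a set) \<Rightarrow> real \<Rightarrow> (nat \<Rightarrow> 'a) \<Rightarrow> nat \<Rightarrow> 'a" where
  "mt_z N A g x i = (if i = N
      then resolvent g (A N) (mt_zz A g x 1 + mt_zz A g x (N - 1) - x (N - 1))
      else mt_zz A g x i)"

definition mt_op :: "nat \<Rightarrow> (nat \<Rightarrow> 'a::real_vector \<Rightarrow> 'a set) \<Rightarrow> real \<Rightarrow> real \<Rightarrow> (nat \<Rightarrow> 'a) \<Rightarrow> nat \<Rightarrow> 'a" where
  "mt_op N A g \<theta> x = (\<lambda>i. if i \<in> {1..N-1}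
      then x i + \<theta> *\<^sub>R (mt_z N A g x (Suc i) - mt_z N A g x i) else x i)"

definition mt_fix :: "nat \<Rightarrow> (nat \<Rightarrow> 'a::real_vector \<Rightarrow> 'a set) \<Rightarrow> real \<Rightarrow> real \<Rightarrow> (nat \<Rightarrow> 'a) set" where
  "mt_fix N A g \<theta> = {x. \<forall>i\<in>{1..N-1}. mt_op N A g \<theta> x i = x i}"

definition rlinear_real :: "(nat \<Rightarrow> real) \<Rightarrow> real \<Rightarrow> bool" where
  "rlinear_real a l \<longleftrightarrow> (\<exists>C r. C \<ge> 0 \<and> 0 < r \<and> r < 1 \<and> (\<forall>n. \<bar>a n - l\<bar> \<le> C * r ^ n))"

definition rlinear_vec :: "nat set \<Rightarrow> (nat \<Rightarrow> nat \<Rightarrow> 'a::real_normed_vector) \<Rightarrow> (nat \<Rightarrow> 'a) \<Rightarrow> bool" where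
  "rlinear_vec I a l \<longleftrightarrow> (\<exists>C r. C \<ge> 0 \<and> 0 < r \<and> r < 1 \<and>
      (\<forall>n. sqrt (\<Sum>i\<in>I. (norm (a n i - l i))\<^sup>2) \<le> C * r ^ n))"

end

theory Submission
  imports Defs
begin

lemma conv_comb_nonpos:
  fixes Q :: "('a::real_inner \<times> 'a) set" and u :: "'a \<times> 'a \<Rightarrow> real"
  assumes fin: "finite Q" and u0: "\<forall>q\<in>Q. 0 \<le> u q" and u1: "sum u Q = 1"
   and mono: "\<forall>q\<in>Q. \<forall>q'\<in>Q. inner (fst q - fst q') (snd q - snd q') \<le> 0"
  shows "(\<Sum>q\<in>Q. u q * inner ((1/2) *\<^sub>R ((\<Sum>q\<in>Q. u q *\<^sub>R fst q) + (\<Sum>q\<in>Q. u q *\<^sub>R snd q)) - fst q)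
              ((1/2) *\<^sub>R ((\<Sum>q\<in>Q. u q *\<^sub>R fst q) + (\<Sum>q\<in>Q. u q *\<^sub>R snd q)) - snd q)) \<le> 0"
proof -
  define A where "A = (\<Sum>q\<in>Q. u q *\<^sub>R fst q)"
  define Bv where "Bv = (\<Sum>q\<in>Q. u q *\<^sub>R snd q)"
  define x where "x = (1/2) *\<^sub>R (A + Bv)"
  define S where "S = (\<Sum>q\<in>Q. u q * inner (fst q) (snd q))"
  have D: "(\<Sum>q\<in>Q. \<Sum>q'\<in>Q. u q * u q' * inner (fst q - fst q') (snd q - snd q')) \<le> 0"
    by (intro sum_nonpos) (simp add: mono u0 mult_nonneg_nonpos)
  have e1: "(\<Sum>q\<in>Q. \<Sum>q'\<in>Q. u q * u q' * inner (fst q) (snd q')) = inner A Bv"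
    by (simp add: A_def Bv_def inner_sum_left inner_sum_right sum_distrib_left mult.assoc)
       (subst sum.swap, simp add: mult.left_commute)
  have e2: "(\<Sum>q\<in>Q. \<Sum>q'\<in>Q. u q * u q' * inner (fst q') (snd q)) = inner A Bv"
    using e1 by (subst sum.swap) (simp add: mult.commute)
  have e3: "(\<Sum>q\<in>Q. \<Sum>q'\<in>Q. u q * u q' * inner (fst q) (snd q)) = S"
  proof -
    have "(\<Sum>q\<in>Q. \<Sum>q'\<in>Q. u q * u q' * inner (fst q) (snd q))
        = (\<Sum>q\<in>Q. u q * inner (fst q) (snd q) * (\<Sum>q'\<in>Q. u q'))"
    proof (rule sum.cong[OF refl])
      fix q assume "q \<in> Q"
      have "u q * inner (fst q) (snd q) * (\<Sum>q'\<in>Q. u q') = (\<Sum>q'\<in>Q. u q * inner (fst q) (snd q) * u q')"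
        by (rule sum_distrib_left)
      then show "(\<Sum>q'\<in>Q. u q * u q' * inner (fst q) (snd q)) = u q * inner (fst q) (snd q) * (\<Sum>q'\<in>Q. u q')"
        by (simp add: mult_ac)
    qed
    then show ?thesis using u1 by (simp add: S_def)
  qed
  have e4: "(\<Sum>q\<in>Q. \<Sum>q'\<in>Q. u q * u q' * inner (fst q') (snd q')) = S"
    using e3 by (subst sum.swap) (simp add: mult.commute)
  have "(\<Sum>q\<in>Q. \<Sum>q'\<in>Q. u q * u q' * inner (fst q - fst q') (snd q - snd q'))
      = (\<Sum>q\<in>Q. \<Sum>q'\<in>Q. u q * u q' * inner (fst q) (snd q)) - (\<Sum>q\<in>Q. \<Sum>q'\<in>Q. u q * u q' * inner (fst q) (snd q'))
        - (\<Sum>q\<in>Q. \<Sum>q'\<in>Q. u q * u q' * inner (fst q') (snd q)) + (\<Sum>q\<in>Q. \<Sum>q'\<in>Q. u q * u q' * inner (fst q') (snd q'))"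
    by (simp add: inner_diff_left inner_diff_right algebra_simps sum.distrib sum_subtractf)
  with D e1 e2 e3 e4 have SAB: "S \<le> inner A Bv" by simp
  have "(\<Sum>q\<in>Q. u q * inner (x - fst q) (x - snd q))
     = (\<Sum>q\<in>Q. u q) * inner x x - inner x Bv - inner A x + S"
    by (simp add: S_def A_def Bv_def inner_diff_left inner_diff_right inner_sum_left inner_sum_right
          algebra_simps sum.distrib sum_subtractf sum_distrib_left sum_distrib_right)
  also have "\<dots> \<le> inner (x - A) (x - Bv)"
    using SAB u1 by (simp add: inner_diff_left inner_diff_right inner_commute)
  also have "inner (x - A) (x - Bv) = - ((1/4) * inner (A - Bv) (A - Bv))"
    by (simp add: x_def inner_diff_left inner_diff_right inner_add_left inner_add_right inner_commute algebra_simps)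
  also have "\<dots> \<le> 0" by simp
  finally show ?thesis by (simp add: x_def A_def Bv_def)
qed

lemma cauchy_sq_conv:
  fixes x :: "nat \<Rightarrow> 'a::{real_normed_vector,complete_space}"
  assumes B: "\<And>n m. n \<le> m \<Longrightarrow> (norm (x n - x m))\<^sup>2 \<le> d n" and d: "d \<longlonglongrightarrow> 0"
  shows "\<exists>l. x \<longlonglongrightarrow> l"
proof -
  have "Cauchy x"
  proof (rule CauchyI)
    fix e :: real assume e: "0 < e"
    then have "e\<^sup>2 > 0" by simp
    from order_tendstoD(2)[OF d this] obtain M where M: "\<forall>k\<ge>M. d k < e\<^sup>2"
      by (auto simp: eventually_sequentially)
    show "\<exists>M. \<forall>m\<ge>M. \<forall>n\<ge>M. norm (x m - x n) < e"
    proof (intro exI allI impI)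
      fix m n assume mn: "M \<le> m" "M \<le> n"
      have "(norm (x m - x n))\<^sup>2 < e\<^sup>2"
      proof (cases "m \<le> n")
        case True then show ?thesis using B[of m n] M mn by force
      next
        case False then have "n \<le> m" by simp
        then show ?thesis using B[of n m] M mn norm_minus_commute[of "x m" "x n"] by force
      qed
      then show "norm (x m - x n) < e" using e by (simp add: power_less_imp_less_base)
    qed
  qed
  then show ?thesis using Cauchy_convergent_iff convergent_def by blast
qed

lemma arith_key:
  fixes a b c M i j :: real
  assumes "(b+c)/2 + a/4 \<le> M" "M - i < b" "M - j < c" "j \<le> i"
  shows "a \<le> 4*i"
proof -
  have "b/2 + c/2 + a/4 \<le> M" using assms(1) by (simp add: add_divide_distrib)
  then show ?thesis using assms(2-4) by linarith
qed

lemma finite_ball_inter: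
  fixes P :: "('a::{real_inner,complete_space} \<times> 'a) set"
  assumes fin: "finite P" and mono: "\<forall>q\<in>P. \<forall>q'\<in>P. inner (fst q - fst q') (snd q - snd q') \<le> 0"
  shows "\<exists>x. \<forall>q\<in>P. inner (x - fst q) (x - snd q) \<le> 0"
proof (cases "P = {}")
  case True then show ?thesis by simp
next
  case Pne: False
  define h where "h q x = - inner (x - fst q) (x - snd q)" for q and x :: 'a
  define f where "f x = Min ((\<lambda>q. h q x) ` P)" for x
  have f_le: "f x \<le> h q x" if "q \<in> P" for q x
    unfolding f_def using fin that by simp
  have f_ge: "t \<le> f x \<longleftrightarrow> (\<forall>q\<in>P. t \<le> h q x)" for t x
    unfolding f_def using fin Pne by simp
  have f_gt: "t < f x \<longleftrightarrow> (\<forall>q\<in>P. t < h q x)" for t x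
    unfolding f_def using fin Pne by simp
  have f_in: "\<exists>q\<in>P. f x = h q x" for x
  proof -
    have "f x \<in> (\<lambda>q. h q x) ` P" unfolding f_def using fin Pne by (intro Min_in) auto
    then show ?thesis by auto
  qed
  have hmid: "h q ((1/2) *\<^sub>R (x + y)) = (h q x + h q y)/2 + (norm (x - y))\<^sup>2/4" for q x y
    by (simp add: h_def power2_norm_eq_inner inner_diff_left inner_diff_right inner_add_left inner_add_right
        inner_commute field_simps)
  have fmid: "(f x + f y)/2 + (norm (x - y))\<^sup>2/4 \<le> f ((1/2) *\<^sub>R (x + y))" for x y
    unfolding f_ge
  proof
    fix q assume "q \<in> P"
    then have "f x \<le> h q x" "f y \<le> h q y" using f_le by auto
    then show "(f x + f y)/2 + (norm (x - y))\<^sup>2/4 \<le> h q ((1/2) *\<^sub>R (x + y))" by (simp add: hmid)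
  qed
  have hform: "h q x = (norm (fst q - snd q))\<^sup>2/4 - (norm (x - (1/2) *\<^sub>R (fst q + snd q)))\<^sup>2" for q x
    by (simp add: h_def power2_norm_eq_inner inner_diff_left inner_diff_right inner_add_left inner_add_right
        inner_commute field_simps)
  obtain q0 where q0: "q0 \<in> P" using Pne by auto
  have bdd: "bdd_above (range f)"
  proof (rule bdd_aboveI2)
    fix x
    have "f x \<le> h q0 x" using f_le q0 by simp
    also have "\<dots> \<le> (norm (fst q0 - snd q0))\<^sup>2/4" by (simp add: hform)
    finally show "f x \<le> (norm (fst q0 - snd q0))\<^sup>2/4" .
  qed
  define M where "M = Sup (range f)"
  have fM: "f x \<le> M" for x unfolding M_def using bdd by (intro cSup_upper) auto
  have "\<forall>n. \<exists>x. M - inverse (real (Suc n)) < f x"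
  proof
    fix n
    have "M - inverse (real (Suc n)) < M" by simp
    then show "\<exists>x. M - inverse (real (Suc n)) < f x"
      unfolding M_def using less_cSup_iff[of "range f"] bdd by auto
  qed
  then obtain xs where xs: "\<And>n. M - inverse (real (Suc n)) < f (xs n)" by metis
  have "\<exists>l. xs \<longlonglongrightarrow> l"
  proof (rule cauchy_sq_conv)
    fix n m :: nat assume nm: "n \<le> m"
    have i: "inverse (real (Suc m)) \<le> inverse (real (Suc n))" using nm by (simp add: field_simps)
    have "(f (xs n) + f (xs m))/2 + (norm (xs n - xs m))\<^sup>2/4 \<le> M"
      using fmid[of "xs n" "xs m"] fM[of "(1/2) *\<^sub>R (xs n + xs m)"] by linarith
    then show "(norm (xs n - xs m))\<^sup>2 \<le> 4 * inverse (real (Suc n))"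
      using xs[of n] xs[of m] i
      by (rule arith_key)
  next
    show "(\<lambda>n. 4 * inverse (real (Suc n))) \<longlonglongrightarrow> 0"
      using tendsto_mult[OF tendsto_const LIMSEQ_inverse_real_of_nat, of 4] by simp
  qed
  then obtain xst where xst: "xs \<longlonglongrightarrow> xst" by blast
  have hge: "M \<le> h q xst" if q: "q \<in> P" for q
  proof (rule LIMSEQ_le)
    show "(\<lambda>n. M - inverse (real (Suc n))) \<longlonglongrightarrow> M"
      using tendsto_diff[OF tendsto_const LIMSEQ_inverse_real_of_nat, of M] by simp
    show "(\<lambda>n. h q (xs n)) \<longlonglongrightarrow> h q xst"
      unfolding h_def by (intro tendsto_intros xst)
    show "\<exists>N. \<forall>n\<ge>N. M - inverse (real (Suc n)) \<le> h q (xs n)"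
      using xs f_le[OF q] by (meson less_le_trans less_imp_le)
  qed
  have M0: "0 \<le> M"
  proof (rule ccontr)
    assume Mneg: "\<not> 0 \<le> M"
    define I where "I = {q\<in>P. h q xst = M}"
    have Ifin: "finite I" using fin unfolding I_def by simp
    have Isub: "I \<subseteq> P" unfolding I_def by auto
    have Ine: "I \<noteq> {}"
    proof -
      obtain q where q: "q \<in> P" "f xst = h q xst" using f_in by blast
      have "f xst = M" using fM[of xst] f_ge[of M xst] hge by auto
      then have "q \<in> I" using q unfolding I_def by simp
      then show ?thesis by auto
    qed
    define mid :: "'a \<times> 'a \<Rightarrow> 'a" where "mid q = (1/2) *\<^sub>R (fst q + snd q)" for q
    have lin: "linear mid" unfolding mid_def
      by (intro linearI) (auto simp: algebra_simps)
    define K where "K = convex hull (mid ` I)"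
    have Kc: "compact K" unfolding K_def using Ifin by (intro finite_imp_compact_convex_hull) simp
    have Kne: "K \<noteq> {}" unfolding K_def using Ine by simp
    have Kconv: "convex K" unfolding K_def by simp
    obtain cb where cb: "cb \<in> K" "\<forall>y\<in>K. dist xst cb \<le> dist xst y"
      using continuous_attains_inf[OF Kc Kne, of "\<lambda>y. dist xst y"] continuous_on_dist[OF continuous_on_const continuous_on_id]
    by auto
    show False
    proof (cases "xst \<in> K")
      case True
      then have "xst \<in> mid ` (convex hull I)" unfolding K_def using convex_hull_linear_image[OF lin] by simp
      then obtain qb where qb: "qb \<in> convex hull I" "xst = mid qb" by auto
      then obtain u where u: "\<forall>q\<in>I. 0 \<le> u q" "sum u I = 1" "(\<Sum>q\<in>I. u q *\<^sub>R q) = qb"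
        using convex_hull_finite[OF Ifin] by auto
      have fq: "fst qb = (\<Sum>q\<in>I. u q *\<^sub>R fst q)" "snd qb = (\<Sum>q\<in>I. u q *\<^sub>R snd q)"
        using u(3) by (auto simp: fst_sum snd_sum)
      have monoI: "\<forall>q\<in>I. \<forall>q'\<in>I. inner (fst q - fst q') (snd q - snd q') \<le> 0"
        using mono Isub by blast
      have "(\<Sum>q\<in>I. u q * inner (xst - fst q) (xst - snd q)) \<le> 0"
        using conv_comb_nonpos[OF Ifin u(1) u(2) monoI] qb(2) fq unfolding mid_def by simp
      moreover have "(\<Sum>q\<in>I. u q * inner (xst - fst q) (xst - snd q)) = (\<Sum>q\<in>I. u q * (- M))"
        by (intro sum.cong refl) (auto simp: I_def h_def)
      moreover have "(\<Sum>q\<in>I. u q * (- M)) = - M" using u(2) by (simp add: sum_negf sum_distrib_right[symmetric])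
      ultimately show False using Mneg by simp
    next
      case False
      define dd where "dd = cb - xst"
      have dd0: "dd \<noteq> 0" using False cb(1) unfolding dd_def by auto
      have ndd: "0 < inner dd dd" using dd0 by simp
      have hstep: "h q (xst + t *\<^sub>R dd) = h q xst - 2 * t * inner (xst - mid q) dd - t\<^sup>2 * inner dd dd" for q t
        by (simp add: h_def mid_def inner_diff_left inner_diff_right inner_add_left
            inner_add_right inner_commute algebra_simps power2_eq_square)
      have evq: "eventually (\<lambda>t. M < h q (xst + t *\<^sub>R dd)) (at_right 0)" if q: "q \<in> P" for q
      proof (cases "q \<in> I")
        case True
        have "mid q \<in> K" unfolding K_def using True by (simp add: hull_subset[THEN subsetD])
        then have ip: "inner (xst - cb) (mid q - cb) \<le> 0"
          using any_closest_point_dot[OF Kconv compact_imp_closed[OF Kc] cb(1) _ cb(2)] by blast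
        have "inner (xst - mid q) dd = - inner dd dd + inner (xst - cb) (mid q - cb)"
          by (simp add: dd_def inner_diff_left inner_diff_right inner_commute algebra_simps)
        then have il: "inner (xst - mid q) dd \<le> - inner dd dd" using ip by simp
        have hq: "h q xst = M" using True unfolding I_def by simp
        show ?thesis unfolding eventually_at_right_field
        proof (intro exI[of _ 1] conjI allI impI)
          fix t :: real assume t: "0 < t" "t < 1"
          have "0 < t * (2 - t) * inner dd dd" using t ndd by simp
          moreover have "2 * t * inner (xst - mid q) dd \<le> 2 * t * (- inner dd dd)"
            using il t by (intro mult_left_mono) auto
          ultimately show "M < h q (xst + t *\<^sub>R dd)" unfolding hstep hq
            by (simp add: algebra_simps power2_eq_square)
        qed simp
      next
        case False
        then have "M < h q xst" using hge[OF q] q unfolding I_def by auto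
        moreover have "((\<lambda>t. h q (xst + t *\<^sub>R dd)) \<longlongrightarrow> h q (xst + 0 *\<^sub>R dd)) (at_right 0)"
          unfolding h_def by (intro tendsto_intros)
        ultimately show ?thesis by (intro order_tendstoD(1)) auto
      qed
      have "eventually (\<lambda>t. \<forall>q\<in>P. M < h q (xst + t *\<^sub>R dd)) (at_right 0)"
        using eventually_ball_finite[OF fin, of "\<lambda>t q. M < h q (xst + t *\<^sub>R dd)" "at_right 0"] evq
        by simp
      then obtain b where b: "b > 0" "\<forall>t>0. t < b \<longrightarrow> (\<forall>q\<in>P. M < h q (xst + t *\<^sub>R dd))"
        unfolding eventually_at_right_field by auto
      then have "\<forall>q\<in>P. M < h q (xst + (b/2) *\<^sub>R dd)" by simp
      then have "M < f (xst + (b/2) *\<^sub>R dd)" using f_gt by simp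
      then show False using fM by (simp add: not_less[symmetric])
    qed
  qed
  have "\<forall>q\<in>P. 0 \<le> h q xst" using hge M0 by (meson order_trans)
  then show ?thesis unfolding h_def by auto
qed

lemma sq_tendsto_zero:
  fixes f :: "nat \<Rightarrow> 'a::real_normed_vector"
  assumes "\<And>n. (norm (f n))\<^sup>2 \<le> d n" "d \<longlonglongrightarrow> 0"
  shows "f \<longlonglongrightarrow> 0"
proof (rule Lim_null_comparison)
  show "\<forall>\<^sub>F n in sequentially. norm (f n) \<le> sqrt (d n)"
    using assms(1) by (intro always_eventually allI real_le_rsqrt) simp
  show "(\<lambda>n. sqrt (d n)) \<longlonglongrightarrow> 0"
    using tendsto_real_sqrt[OF assms(2)] by simp
qed

lemma mid_in_C:
  fixes a b x1 x2 :: "'a::real_inner"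
  assumes "inner (x1 - a) (x1 - b) \<le> 0" "inner (x2 - a) (x2 - b) \<le> 0"
  shows "inner ((1/2) *\<^sub>R (x1 + x2) - a) ((1/2) *\<^sub>R (x1 + x2) - b) \<le> 0"
proof -
  have "inner ((1/2) *\<^sub>R (x1 + x2) - a) ((1/2) *\<^sub>R (x1 + x2) - b)
      = inner (x1 - a) (x1 - b)/2 + inner (x2 - a) (x2 - b)/2 - inner (x1 - x2) (x1 - x2) / 4"
    by (simp add: inner_diff_left inner_diff_right inner_add_left inner_add_right inner_commute field_simps)
  also have "\<dots> \<le> 0" using assms inner_ge_zero[of "x1 - x2"] by linarith
  finally show ?thesis .
qed

lemma ball_norm_bound:
  fixes a b x :: "'a::real_inner"
  assumes "inner (x - a) (x - b) \<le> 0"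
  shows "norm x \<le> norm ((1/2) *\<^sub>R (a + b)) + norm (a - b)"
proof -
  have "inner (x - a) (x - b) = (norm (x - (1/2) *\<^sub>R (a + b)))\<^sup>2 - (norm (a - b))\<^sup>2/4"
    by (simp add: power2_norm_eq_inner inner_diff_left inner_diff_right inner_add_left inner_add_right
        inner_commute field_simps)
  with assms have "(norm (x - (1/2) *\<^sub>R (a + b)))\<^sup>2 \<le> (norm (a - b))\<^sup>2"
    using zero_le_power2[of "norm (a - b)"] by linarith
  then have "norm (x - (1/2) *\<^sub>R (a + b)) \<le> norm (a - b)"
    using power2_le_imp_le by fastforce
  then show ?thesis using norm_triangle_sub[of x "(1/2) *\<^sub>R (a + b)"] by linarith
qed

lemma parallelogram_bound:
  fixes x1 x2 :: "'a::real_inner" and s e p :: real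
  assumes "norm x1 \<le> s + e" "norm x2 \<le> s + e" "s - e \<le> norm ((1/2) *\<^sub>R (x1 + x2))" "0 \<le> s" "0 \<le> e"
  shows "(norm (x1 - x2))\<^sup>2 \<le> 16 * s * e + 4 * e\<^sup>2"
proof -
  have par: "(norm (x1 - x2))\<^sup>2 = 2 * (norm x1)\<^sup>2 + 2 * (norm x2)\<^sup>2 - 4 * (norm ((1/2) *\<^sub>R (x1 + x2)))\<^sup>2"
    by (simp add: power2_norm_eq_inner inner_diff_left inner_diff_right inner_add_left inner_add_right
        inner_commute field_simps)
  have "(norm x1)\<^sup>2 \<le> (s + e)\<^sup>2" "(norm x2)\<^sup>2 \<le> (s + e)\<^sup>2"
    using assms by (auto intro!: power_mono)
  moreover have "s\<^sup>2 - 2 * s * e \<le> (norm ((1/2) *\<^sub>R (x1 + x2)))\<^sup>2"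
  proof (cases "s - e \<ge> 0")
    case True
    then have "(s - e)\<^sup>2 \<le> (norm ((1/2) *\<^sub>R (x1 + x2)))\<^sup>2" using assms(3) by (intro power_mono) auto
    then show ?thesis by (simp add: power2_eq_square algebra_simps) (smt (verit) assms(5) mult_nonneg_nonneg)
  next
    case False
    then have "s * s \<le> s * (2 * e)" using assms(4,5) by (intro mult_left_mono) auto
    then have "s\<^sup>2 - 2 * s * e \<le> 0" by (simp add: power2_eq_square algebra_simps)
    then show ?thesis by (smt (verit) zero_le_power2)
  qed
  ultimately show ?thesis unfolding par by (simp add: power2_eq_square algebra_simps)
qed

lemma minty:
  fixes A :: "'a::{real_inner,complete_space} \<Rightarrow> 'a set" and g :: real
  assumes mm: "maximally_monotone_op A" and g: "g > 0"
  shows "\<exists>x. \<exists>u\<in>A x. y = x + g *\<^sub>R u"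
proof -
  have monA: "monotone_op A" using mm unfolding maximally_monotone_op_def by simp
  define G where "G = {(z, v). v \<in> A z}"
  define pr where "pr e = (fst e, y - g *\<^sub>R snd e)" for e :: "'a \<times> 'a"
  define C where "C F = {x. \<forall>e\<in>F. inner (x - fst e) (x - (y - g *\<^sub>R snd e)) \<le> 0}" for F
  define fs where "fs F \<longleftrightarrow> finite F \<and> F \<subseteq> G" for F
  have Cne: "C F \<noteq> {}" if "fs F" for F
  proof -
    have "finite (pr ` F)" using that unfolding fs_def by simp
    moreover have "\<forall>q\<in>pr ` F. \<forall>q'\<in>pr ` F. inner (fst q - fst q') (snd q - snd q') \<le> 0"
    proof (intro ballI)
      fix q q' assume "q \<in> pr ` F" "q' \<in> pr ` F"
      then obtain e e' where ee: "e \<in> F" "e' \<in> F" "q = pr e" "q' = pr e'" by auto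
      then have "snd e \<in> A (fst e)" "snd e' \<in> A (fst e')" using that unfolding fs_def G_def by auto
      then have "0 \<le> inner (fst e - fst e') (snd e - snd e')" using monA unfolding monotone_op_def by blast
      moreover have "inner (fst q - fst q') (snd q - snd q') = - g * inner (fst e - fst e') (snd e - snd e')"
        using ee by (simp add: pr_def inner_diff_right algebra_simps)
      ultimately show "inner (fst q - fst q') (snd q - snd q') \<le> 0" using g
        by (simp add: mult_nonneg_nonneg)
    qed
    ultimately obtain x where "\<forall>q\<in>pr ` F. inner (x - fst q) (x - snd q) \<le> 0"
      using finite_ball_inter by blast
    then have "x \<in> C F" unfolding C_def pr_def by auto
    then show ?thesis by auto
  qed
  have C_anti: "F \<subseteq> F' \<Longrightarrow> C F' \<subseteq> C F" for F F' unfolding C_def by auto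
  have Cmid: "x1 \<in> C F \<Longrightarrow> x2 \<in> C F \<Longrightarrow> (1/2) *\<^sub>R (x1 + x2) \<in> C F" for x1 x2 F
    unfolding C_def using mid_in_C by blast
  have key: "\<exists>x. \<forall>e\<in>G. inner (x - fst e) (x - (y - g *\<^sub>R snd e)) \<le> 0"
  proof (cases "G = {}")
    case True then show ?thesis by simp
  next
    case False
    then obtain e0 where e0: "e0 \<in> G" by auto
    define Rad where "Rad = norm ((1/2) *\<^sub>R (fst e0 + (y - g *\<^sub>R snd e0))) + norm (fst e0 - (y - g *\<^sub>R snd e0))"
    have Rb: "norm x \<le> Rad" if "x \<in> C F" "e0 \<in> F" for x F
      using that ball_norm_bound unfolding C_def Rad_def by blast
    define phi where "phi F = Inf (norm ` C F)" for F
    have bb: "bdd_below (norm ` C F)" for F by (rule bdd_belowI2[where m=0]) simp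
    have phi_le: "x \<in> C F \<Longrightarrow> phi F \<le> norm x" for x F
      unfolding phi_def using bb by (intro cInf_lower) auto
    have phi_ge0: "fs F \<Longrightarrow> 0 \<le> phi F" for F
      unfolding phi_def using Cne by (intro cInf_greatest) auto
    have phi_app: "fs F \<Longrightarrow> 0 < ep \<Longrightarrow> \<exists>x\<in>C F. norm x < phi F + ep" for F ep
    proof -
      assume F: "fs F" and ep: "0 < ep"
      have "Inf (norm ` C F) < phi F + ep" using ep unfolding phi_def by simp
      then show ?thesis using cInf_less_iff[of "norm ` C F"] Cne[OF F] bb by auto
    qed
    have phi_mono: "fs F' \<Longrightarrow> F \<subseteq> F' \<Longrightarrow> phi F \<le> phi F'" for F F'
    proof -
      assume F': "fs F'" and sub: "F \<subseteq> F'"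
      show "phi F \<le> phi F'" unfolding phi_def[of F']
        using Cne[OF F'] C_anti[OF sub] phi_le by (intro cInf_greatest) auto
    qed
    have fs_ins: "fs F \<Longrightarrow> e \<in> G \<Longrightarrow> fs (insert e F)" for F e unfolding fs_def by auto
    have phi_R: "fs F \<Longrightarrow> phi F \<le> Rad" for F
    proof -
      assume F: "fs F"
      have F0: "fs (insert e0 F)" using fs_ins[OF F e0] .
      obtain x where x: "x \<in> C (insert e0 F)" using Cne[OF F0] by auto
      have "phi F \<le> phi (insert e0 F)" using phi_mono[OF F0] by auto
      also have "\<dots> \<le> norm x" using phi_le[OF x] .
      also have "\<dots> \<le> Rad" using Rb[OF x] by simp
      finally show ?thesis .
    qed
    define S where "S = phi ` {F. fs F}"
    have Sne: "S \<noteq> {}" unfolding S_def fs_def by auto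
    have Sbdd: "bdd_above S" unfolding S_def using phi_R by (intro bdd_aboveI2[where M=Rad]) auto
    define s where "s = Sup S"
    have phi_s: "fs F \<Longrightarrow> phi F \<le> s" for F unfolding s_def S_def
      using Sbdd S_def by (intro cSup_upper) auto
    have s0: "0 \<le> s" using phi_s[of "{}"] phi_ge0[of "{}"] unfolding fs_def by simp
    define ep where "ep n = inverse (real (Suc n))" for n
    have ep0: "0 < ep n" for n unfolding ep_def by simp
    have ep_mono: "n \<le> m \<Longrightarrow> ep m \<le> ep n" for n m unfolding ep_def by (simp add: field_simps)
    have "\<forall>n. \<exists>F. fs F \<and> s - ep n < phi F"
    proof
      fix n
      have "s - ep n < Sup S" using ep0[of n] unfolding s_def by simp
      then show "\<exists>F. fs F \<and> s - ep n < phi F" using less_cSup_iff[OF Sne Sbdd] unfolding S_def by auto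
    qed
    then obtain Fs where Fs: "\<And>n. fs (Fs n)" "\<And>n. s - ep n < phi (Fs n)" by metis
    define Gs where "Gs n = (\<Union>k\<le>n. Fs k)" for n
    have Gs_fs: "fs (Gs n)" for n using Fs(1) unfolding Gs_def fs_def by auto
    have Gs_mono: "n \<le> m \<Longrightarrow> Gs n \<subseteq> Gs m" for n m unfolding Gs_def
      by (intro UN_mono) auto
    have Gs_phi: "s - ep n \<le> phi (Gs n)" for n
    proof -
      have "phi (Fs n) \<le> phi (Gs n)" using phi_mono[OF Gs_fs] unfolding Gs_def by auto
      then show ?thesis using Fs(2)[of n] by simp
    qed
    define d where "d n = 16 * s * ep n + 4 * (ep n)\<^sup>2" for n
    have d0: "d \<longlonglongrightarrow> 0"
    proof -
      have "ep \<longlonglongrightarrow> 0" unfolding ep_def by (rule LIMSEQ_inverse_real_of_nat)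
      then have "(\<lambda>n. 16 * s * ep n + 4 * (ep n)\<^sup>2) \<longlonglongrightarrow> 16 * s * 0 + 4 * 0\<^sup>2"
        by (intro tendsto_intros)
      then show ?thesis unfolding d_def by simp
    qed
    have close: "(norm (x1 - x2))\<^sup>2 \<le> d n"
      if "x1 \<in> C (Gs n)" "x2 \<in> C (Gs n)" "norm x1 \<le> s + ep n" "norm x2 \<le> s + ep n" for x1 x2 n
    proof -
      have "s - ep n \<le> norm ((1/2) *\<^sub>R (x1 + x2))"
        using Gs_phi[of n] phi_le[OF Cmid[OF that(1,2)]] by linarith
      then show ?thesis unfolding d_def using parallelogram_bound[OF that(3,4) _ s0] ep0[of n] by simp
    qed
    have "\<forall>n. \<exists>x\<in>C (Gs n). norm x < phi (Gs n) + ep n" using phi_app[OF Gs_fs ep0] by blast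
    then obtain xs where xs: "\<And>n. xs n \<in> C (Gs n)" "\<And>n. norm (xs n) < phi (Gs n) + ep n" by metis
    have xs_b: "norm (xs n) \<le> s + ep n" for n using xs(2)[of n] phi_s[OF Gs_fs, of n] by simp
    have "\<exists>l. xs \<longlonglongrightarrow> l"
    proof (rule cauchy_sq_conv[OF _ d0])
      fix n m :: nat assume nm: "n \<le> m"
      have "xs m \<in> C (Gs n)" using C_anti[OF Gs_mono[OF nm]] xs(1)[of m] by auto
      moreover have "norm (xs m) \<le> s + ep n" using xs_b[of m] ep_mono[OF nm] by simp
      ultimately show "(norm (xs n - xs m))\<^sup>2 \<le> d n" using close xs(1) xs_b by blast
    qed
    then obtain xl where xl: "xs \<longlonglongrightarrow> xl" by blast
    show ?thesis
    proof (intro exI ballI)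
      fix e assume e: "e \<in> G"
      have "\<forall>n. \<exists>x\<in>C (insert e (Gs n)). norm x < phi (insert e (Gs n)) + ep n"
        using phi_app[OF fs_ins[OF Gs_fs e] ep0] by blast
      then obtain ys where ys: "\<And>n. ys n \<in> C (insert e (Gs n))"
        "\<And>n. norm (ys n) < phi (insert e (Gs n)) + ep n" by metis
      have ys_b: "norm (ys n) \<le> s + ep n" for n
        using ys(2)[of n] phi_s[OF fs_ins[OF Gs_fs e], of n] by simp
      have ysC: "ys n \<in> C (Gs n)" for n using C_anti[of "Gs n" "insert e (Gs n)"] ys(1) by auto
      have "(\<lambda>n. xs n - ys n) \<longlonglongrightarrow> 0"
        using close[OF xs(1) ysC xs_b ys_b] by (intro sq_tendsto_zero[OF _ d0])
      then have "(\<lambda>n. xs n - (xs n - ys n)) \<longlonglongrightarrow> xl - 0" by (intro tendsto_intros xl)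
      then have ysl: "ys \<longlonglongrightarrow> xl" by simp
      have yse: "inner (ys n - fst e) (ys n - (y - g *\<^sub>R snd e)) \<le> 0" for n
        using ys(1)[of n] unfolding C_def by auto
      have "(\<lambda>n. inner (ys n - fst e) (ys n - (y - g *\<^sub>R snd e)))
             \<longlonglongrightarrow> inner (xl - fst e) (xl - (y - g *\<^sub>R snd e))"
        by (intro tendsto_intros ysl)
      then show "inner (xl - fst e) (xl - (y - g *\<^sub>R snd e)) \<le> 0"
        using yse by (intro tendsto_upperbound[of _ _ sequentially]) (auto intro: always_eventually)
    qed
  qed
  then obtain x where x: "\<forall>e\<in>G. inner (x - fst e) (x - (y - g *\<^sub>R snd e)) \<le> 0" by blast
  define u where "u = (1/g) *\<^sub>R (y - x)"
  have yxu: "y = x + g *\<^sub>R u" unfolding u_def using g by simp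
  have ux: "0 \<le> inner (x - z) (u - v)" if "v \<in> A z" for z v
  proof -
    have "inner (x - z) (x - (y - g *\<^sub>R v)) \<le> 0" using x that unfolding G_def by auto
    moreover have "inner (x - z) (u - v) = - (1/g) * inner (x - z) (x - (y - g *\<^sub>R v))"
      unfolding u_def using g by (simp add: inner_diff_right inner_diff_left algebra_simps)
    ultimately show ?thesis using g by (simp add: divide_nonpos_pos)
  qed
  define A' where "A' = A(x := insert u (A x))"
  have "monotone_op A'"
    unfolding monotone_op_def
  proof (intro allI impI)
    fix x1 x2 u1 u2 assume h1: "u1 \<in> A' x1" and h2: "u2 \<in> A' x2"
    consider "u1 \<in> A x1" "u2 \<in> A x2" | "x1 = x" "u1 = u" "u2 \<in> A x2" | "x2 = x" "u2 = u" "u1 \<in> A x1"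
      | "x1 = x" "u1 = u" "x2 = x" "u2 = u"
      using h1 h2 unfolding A'_def by (auto split: if_splits)
    then show "0 \<le> inner (x1 - x2) (u1 - u2)"
    proof cases
      case 1 then show ?thesis using monA unfolding monotone_op_def by blast
    next
      case 2 then show ?thesis using ux by blast
    next
      case 3
      then have "0 \<le> inner (x - x1) (u - u1)" using ux by blast
      also have "inner (x - x1) (u - u1) = inner (x1 - x2) (u1 - u2)"
        using 3 by (simp add: inner_diff_left inner_diff_right algebra_simps inner_commute)
      finally show ?thesis .
    qed simp
  qed
  moreover have "\<forall>z. A z \<subseteq> A' z" unfolding A'_def by auto
  ultimately have "A' = A" using mm unfolding maximally_monotone_op_def by blast
  then have "u \<in> A x" unfolding A'_def by (metis fun_upd_same insertI1)
  then show ?thesis using yxu by blast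
qed

lemma res_unique:
  assumes mon: "monotone_op A" and g: "g > 0" and u: "u \<in> A x" and y: "y = x + g *\<^sub>R u"
  shows "resolvent g A y = x"
  unfolding resolvent_def
proof (rule the_equality)
  show "\<exists>u\<in>A x. y = x + g *\<^sub>R u" using u y by blast
next
  fix x' assume "\<exists>u\<in>A x'. y = x' + g *\<^sub>R u"
  then obtain u' where u': "u' \<in> A x'" "y = x' + g *\<^sub>R u'" by blast
  have xx: "x' - x = g *\<^sub>R (u - u')" using y u'(2) by (simp add: algebra_simps)
  have "0 \<le> inner (x' - x) (u' - u)" using mon u u'(1) unfolding monotone_op_def by blast
  also have "inner (x' - x) (u' - u) = - g * inner (u - u') (u - u')"
    unfolding xx by (simp add: inner_diff_right algebra_simps inner_commute)
  finally have "inner (u - u') (u - u') \<le> 0" using g by (simp add: mult_le_0_iff)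
  then have "inner (u - u') (u - u') = 0" using inner_ge_zero[of "u - u'"] by linarith
  then have "u = u'" by simp
  then show "x' = x" using xx by simp
qed

lemma res_spec:
  fixes A :: "'a::{real_inner,complete_space} \<Rightarrow> 'a set"
  assumes mm: "maximally_monotone_op A" and g: "g > 0"
  shows "\<exists>u\<in>A (resolvent g A y). y = resolvent g A y + g *\<^sub>R u"
proof -
  obtain x u where xu: "u \<in> A x" "y = x + g *\<^sub>R u" using minty[OF mm g] by blast
  have mon: "monotone_op A" using mm unfolding maximally_monotone_op_def by simp
  have "resolvent g A y = x" using res_unique[OF mon g xu(1) xu(2)] .
  then show ?thesis using xu by auto
qed

lemma firm_ineq:
  assumes mon: "monotone_op A" and g: "g > 0" and u: "u \<in> A x" and u': "u' \<in> A x'"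
  shows "(norm (x - x'))\<^sup>2 + (norm (g *\<^sub>R u - g *\<^sub>R u'))\<^sup>2 \<le> (norm ((x + g *\<^sub>R u) - (x' + g *\<^sub>R u')))\<^sup>2"
proof -
  have "0 \<le> inner (x - x') (u - u')" using mon u u' unfolding monotone_op_def by blast
  then have i: "0 \<le> inner (x - x') (g *\<^sub>R u - g *\<^sub>R u')" using g
    by (simp add: scaleR_diff_right[symmetric])
  have "(norm ((x + g *\<^sub>R u) - (x' + g *\<^sub>R u')))\<^sup>2 = (norm ((x - x') + (g *\<^sub>R u - g *\<^sub>R u')))\<^sup>2"
    by (simp add: algebra_simps)
  also have "\<dots> = (norm (x - x'))\<^sup>2 + (norm (g *\<^sub>R u - g *\<^sub>R u'))\<^sup>2 + 2 * inner (x - x') (g *\<^sub>R u - g *\<^sub>R u')"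
    by (simp add: power2_norm_eq_inner inner_add_left inner_add_right inner_commute)
  finally show ?thesis using i by simp
qed

lemma res_nonexp:
  fixes A :: "'a::{real_inner,complete_space} \<Rightarrow> 'a set"
  assumes mm: "maximally_monotone_op A" and g: "g > 0"
  shows "norm (resolvent g A y - resolvent g A y') \<le> norm (y - y')"
proof -
  have mon: "monotone_op A" using mm unfolding maximally_monotone_op_def by simp
  obtain u where u: "u \<in> A (resolvent g A y)" "y = resolvent g A y + g *\<^sub>R u" using res_spec[OF mm g] by blast
  obtain u' where u': "u' \<in> A (resolvent g A y')" "y' = resolvent g A y' + g *\<^sub>R u'" using res_spec[OF mm g] by blast
  have "(norm (resolvent g A y - resolvent g A y'))\<^sup>2 \<le> (norm (y - y'))\<^sup>2"
  proof -
    have "(norm (resolvent g A y - resolvent g A y'))\<^sup>2 + (norm (g *\<^sub>R u - g *\<^sub>R u'))\<^sup>2 \<le> (norm (y - y'))\<^sup>2"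
      using firm_ineq[OF mon g u(1) u'(1)] u(2) u'(2) by simp
    then show ?thesis using zero_le_power2[of "norm (g *\<^sub>R u - g *\<^sub>R u')"] by linarith
  qed
  then show ?thesis using power2_le_imp_le by fastforce
qed

lemma lip_ineq:
  fixes F :: "'a::real_inner \<Rightarrow> 'a"
  assumes mB: "monotone_op B" and sub: "\<And>z. sv F z \<subseteq> B z" and lip: "L-lipschitz_on UNIV F"
    and u: "u \<in> B x" and t: "t > 0"
  shows "0 \<le> inner h (u - F x) + t * L * (norm h)\<^sup>2"
proof -
    have "F (x - t *\<^sub>R h) \<in> B (x - t *\<^sub>R h)" using sub[of "x - t *\<^sub>R h"] unfolding sv_def by simp
    then have "0 \<le> inner (x - (x - t *\<^sub>R h)) (u - F (x - t *\<^sub>R h))"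
      using mB[unfolded monotone_op_def, rule_format, OF u] by blast
    moreover have "inner (x - (x - t *\<^sub>R h)) (u - F (x - t *\<^sub>R h)) = t * inner h (u - F (x - t *\<^sub>R h))"
      by simp
    ultimately have "0 \<le> t * inner h (u - F (x - t *\<^sub>R h))" by simp
    then have a: "0 \<le> inner h (u - F (x - t *\<^sub>R h))" using t zero_le_mult_iff by force
    have "norm (F x - F (x - t *\<^sub>R h)) \<le> L * norm (x - (x - t *\<^sub>R h))"
      using lipschitz_onD[OF lip, of x "x - t *\<^sub>R h"] unfolding dist_norm by simp
    moreover have "norm (x - (x - t *\<^sub>R h)) = t * norm h" using t by simp
    ultimately have nb: "norm (F x - F (x - t *\<^sub>R h)) \<le> L * (t * norm h)" by metis
    have "inner h (F x - F (x - t *\<^sub>R h)) \<le> norm h * norm (F x - F (x - t *\<^sub>R h))"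
      by (rule norm_cauchy_schwarz)
    also have "\<dots> \<le> norm h * (L * (t * norm h))" by (rule mult_left_mono[OF nb]) simp
    also have "\<dots> = t * L * (norm h)\<^sup>2" by (simp add: power2_eq_square mult_ac)
    finally have "inner h (F x - F (x - t *\<^sub>R h)) \<le> t * L * (norm h)\<^sup>2" .
    moreover have "inner h (u - F (x - t *\<^sub>R h)) = inner h (u - F x) + inner h (F x - F (x - t *\<^sub>R h))"
      by (simp add: inner_diff_right)
    ultimately show ?thesis using a by linarith
  qed


lemma lip_mono_max:
  fixes F :: "'a::real_inner \<Rightarrow> 'a"
  assumes mon: "monotone_op (sv F)" and lip: "L-lipschitz_on UNIV F"
  shows "maximally_monotone_op (sv F)"
  unfolding maximally_monotone_op_def
proof (intro conjI allI impI)
  show "monotone_op (sv F)" by (rule mon)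
  fix B assume B: "monotone_op B \<and> (\<forall>x. sv F x \<subseteq> B x)"
  have L0: "0 \<le> L" using lip unfolding lipschitz_on_def by simp
  have mB: "monotone_op B" using B by (rule conjunct1)
  have sub: "sv F z \<subseteq> B z" for z using B by (intro spec[OF conjunct2[OF B]])
  have key: "u = F x" if u: "u \<in> B x" for x u
  proof -
    have ineq: "0 \<le> inner h (u - F x) + t * L * (norm h)\<^sup>2" if t: "t > 0" for t h
      by (rule lip_ineq[OF mB sub lip u t])
    define h where "h = F x - u"
    have "inner h (u - F x) = - (norm h)\<^sup>2" unfolding h_def
      by (simp add: power2_norm_eq_inner inner_diff_left inner_diff_right inner_commute)
    then have "\<forall>t>0. (norm h)\<^sup>2 \<le> t * (L * (norm h)\<^sup>2)"
    proof (intro allI impI)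
      fix t :: real assume "t > 0"
      from ineq[OF this, of h] have "0 \<le> inner h (u - F x) + t * L * (norm h)\<^sup>2" .
      moreover assume "inner h (u - F x) = - (norm h)\<^sup>2"
      ultimately show "(norm h)\<^sup>2 \<le> t * (L * (norm h)\<^sup>2)" by (simp add: mult.assoc)
    qed
    note allt = this
    define t where "t = 1 / (2 * (L + 1))"
    have tp: "t > 0" unfolding t_def using L0 by simp
    have a: "(norm h)\<^sup>2 \<le> t * L * (norm h)\<^sup>2" using allt tp by (simp add: mult.assoc)
    have "t * L \<le> 1/2" unfolding t_def using L0 by (simp add: field_simps)
    then have "t * L * (norm h)\<^sup>2 \<le> (1/2) * (norm h)\<^sup>2" by (rule mult_right_mono) simp
    with a have "(norm h)\<^sup>2 \<le> 0" by linarith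
    then have "h = 0" by simp
    then show ?thesis unfolding h_def by simp
  qed
  show "B = sv F"
  proof (rule ext)
    fix x
    show "B x = sv F x"
    proof (rule equalityI)
      show "B x \<subseteq> sv F x" unfolding sv_def using key by blast
      show "sv F x \<subseteq> B x" by (rule sub)
    qed
  qed
qed

lemma res_sv:
  fixes F :: "'a::{real_inner,complete_space} \<Rightarrow> 'a"
  assumes mm: "maximally_monotone_op (sv F)" and g: "g > 0"
  shows "y = resolvent g (sv F) y + g *\<^sub>R F (resolvent g (sv F) y)"
proof -
  obtain u where "u \<in> sv F (resolvent g (sv F) y)" "y = resolvent g (sv F) y + g *\<^sub>R u"
    using res_spec[OF mm g, of y] by blast
  then show ?thesis unfolding sv_def by simp
qed

lemma mt_tel:
  fixes z b :: "nat \<Rightarrow> 'a::real_inner"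
  assumes "1 \<le> n"
  shows "(\<Sum>i\<in>{1..<n}. inner (z i + (\<Sum>j=1..i. b j)) (z (Suc i) - z i) + (norm (z (Suc i) - z i))\<^sup>2/2)
           + (\<Sum>i=1..n. inner (z i) (b i))
       = (norm (z n))\<^sup>2/2 - (norm (z 1))\<^sup>2/2 + inner (z n) (\<Sum>j=1..n. b j)"
  using assms
proof (induction n rule: nat_induct_at_least)
  case base
  then show ?case by simp
next
  case (Suc n)
  define P where "P = (\<Sum>j=1..n. b j)"
  have s1: "(\<Sum>i\<in>{1..<Suc n}. inner (z i + (\<Sum>j=1..i. b j)) (z (Suc i) - z i) + (norm (z (Suc i) - z i))\<^sup>2/2)
     = (\<Sum>i\<in>{1..<n}. inner (z i + (\<Sum>j=1..i. b j)) (z (Suc i) - z i) + (norm (z (Suc i) - z i))\<^sup>2/2)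
       + (inner (z n + P) (z (Suc n) - z n) + (norm (z (Suc n) - z n))\<^sup>2/2)"
    using Suc.hyps by (simp add: P_def)
  have s2: "(\<Sum>i=1..Suc n. inner (z i) (b i)) = (\<Sum>i=1..n. inner (z i) (b i)) + inner (z (Suc n)) (b (Suc n))"
    by simp
  have s3: "(\<Sum>j=1..Suc n. b j) = P + b (Suc n)" by (simp add: P_def)
  have alg: "inner (z n + P) (z (Suc n) - z n) + (norm (z (Suc n) - z n))\<^sup>2/2 + inner (z (Suc n)) (b (Suc n))
      + ((norm (z n))\<^sup>2/2 - (norm (z 1))\<^sup>2/2 + inner (z n) P)
      = (norm (z (Suc n)))\<^sup>2/2 - (norm (z 1))\<^sup>2/2 + inner (z (Suc n)) (P + b (Suc n))"
    by (simp add: power2_norm_eq_inner inner_add_left inner_add_right inner_diff_left inner_diff_right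
        inner_commute field_simps)
  show ?case unfolding s1 s2 s3 using Suc.IH alg unfolding P_def by simp
qed

definition mt_delta :: "nat \<Rightarrow> real \<Rightarrow> real \<Rightarrow> real \<Rightarrow> real" where
  "mt_delta N th K m = min (th * (1 - th)) (2 * th * m) / (2 * real N ^ 2 * (1 + real N * K)\<^sup>2)"

lemma mt_delta_pos:
  assumes "N \<ge> 2" "0 < th" "th < 1" "0 \<le> K" "0 < m"
  shows "0 < mt_delta N th K m"
proof -
  have a: "0 < 1 + real N * K" using assms by (simp add: add_pos_nonneg)
  have b: "0 < real N" using assms by simp
  have "0 < 2 * real N ^ 2 * (1 + real N * K)\<^sup>2" using a b by simp
  moreover have "0 < min (th * (1 - th)) (2 * th * m)" using assms by simp
  ultimately show ?thesis unfolding mt_delta_def by simp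
qed

lemma sum_sq_bound:
  fixes f :: "nat \<Rightarrow> 'a::real_normed_vector"
  assumes "\<And>i. i \<in> I \<Longrightarrow> norm (f i) \<le> B" "finite I"
  shows "(\<Sum>i\<in>I. (norm (f i))\<^sup>2) \<le> real (card I) * B\<^sup>2"
proof -
  have "(\<Sum>i\<in>I. (norm (f i))\<^sup>2) \<le> (\<Sum>i\<in>I. B\<^sup>2)"
    using assms by (intro sum_mono power_mono) auto
  then show ?thesis by simp
qed

lemma mt_contract:
  fixes x z c :: "nat \<Rightarrow> 'a::real_inner"
  assumes N: "N \<ge> 2" and th: "0 < th" "th < 1"
    and cum: "\<And>i. 1 \<le> i \<Longrightarrow> i \<le> N - 1 \<Longrightarrow> x i = z i + (\<Sum>j=1..i. c j)"
    and last: "z 1 - z N = (\<Sum>j=1..N. c j)"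
    and mono: "\<And>i. 1 \<le> i \<Longrightarrow> i \<le> N \<Longrightarrow> 0 \<le> inner (z i) (c i)"
    and K0: "0 \<le> K" and m0: "0 < m"
    and cs: "((\<forall>i\<in>{1..N-1}. norm (c i) \<le> K * norm (z i)) \<and> m * (norm (z N))\<^sup>2 \<le> inner (z N) (c N))
          \<or> (\<forall>i\<in>{1..N-1}. norm (c i) \<le> K * norm (z i) \<and> m * (norm (z i))\<^sup>2 \<le> inner (z i) (c i))"
  shows "(\<Sum>i=1..N-1. (norm (x i + th *\<^sub>R (z (i+1) - z i)))\<^sup>2) \<le> (1 - mt_delta N th K m) * (\<Sum>i=1..N-1. (norm (x i))\<^sup>2)"
proof -
  define I where "I = {1..N-1}"
  define v where "v i = z (Suc i) - z i" for i
  define X where "X = (\<Sum>i\<in>I. (norm (x i))\<^sup>2)"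
  define V where "V = (\<Sum>i\<in>I. (norm (v i))\<^sup>2)"
  define S where "S = (\<Sum>i=1..N. inner (z i) (c i))"
  define E where "E = (norm (z 1 - z N))\<^sup>2"
  have IN: "{1..<N} = I" unfolding I_def using N by auto
  have finI: "finite I" unfolding I_def by simp
  have cardI: "real (card I) \<le> real N" unfolding I_def by simp
  have exp: "(\<Sum>i\<in>I. (norm (x i + th *\<^sub>R v i))\<^sup>2) = X + 2 * th * (\<Sum>i\<in>I. inner (x i) (v i)) + th\<^sup>2 * V"
  proof -
    have "(norm (x i + th *\<^sub>R v i))\<^sup>2 = (norm (x i))\<^sup>2 + 2 * th * inner (x i) (v i) + th\<^sup>2 * (norm (v i))\<^sup>2" for i
      by (simp add: power2_norm_eq_inner inner_add_left inner_add_right inner_commute power2_eq_square[of th] algebra_simps)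
    then show ?thesis unfolding X_def V_def by (simp add: sum.distrib sum_distrib_left)
  qed
  have tel: "(\<Sum>i\<in>I. inner (x i) (v i) + (norm (v i))\<^sup>2/2) + S = - E/2"
  proof -
    have "(\<Sum>i\<in>I. inner (x i) (v i) + (norm (v i))\<^sup>2/2)
        = (\<Sum>i\<in>{1..<N}. inner (z i + (\<Sum>j=1..i. c j)) (z (Suc i) - z i) + (norm (z (Suc i) - z i))\<^sup>2/2)"
      unfolding IN[symmetric] using cum unfolding v_def by (intro sum.cong refl) (auto simp: IN[symmetric])
    also have "\<dots> + S = (norm (z N))\<^sup>2/2 - (norm (z 1))\<^sup>2/2 + inner (z N) (\<Sum>j=1..N. c j)"
      unfolding S_def using mt_tel[of N z c] N by simp
    also have "\<dots> = - E/2" unfolding last[symmetric] E_def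
      by (simp add: power2_norm_eq_inner inner_diff_left inner_diff_right inner_commute field_simps)
    finally show ?thesis .
  qed
  have sx: "(\<Sum>i\<in>I. inner (x i) (v i)) = - V/2 - S - E/2"
    using tel unfolding V_def by (simp add: sum.distrib sum_divide_distrib[symmetric])
  have E0: "0 \<le> E" unfolding E_def by simp
  have main: "(\<Sum>i\<in>I. (norm (x i + th *\<^sub>R v i))\<^sup>2) \<le> X - (th * (1 - th) * V + 2 * th * S)"
  proof -
    have "(\<Sum>i\<in>I. (norm (x i + th *\<^sub>R v i))\<^sup>2) = X - (th * (1 - th) * V + 2 * th * S) - th * E"
      unfolding exp sx by (simp add: power2_eq_square algebra_simps)
    then show ?thesis using E0 th by (simp add: mult_nonneg_nonneg)
  qed
  define c0 where "c0 = min (th * (1 - th)) (2 * th * m)"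
  define Q where "Q = 2 * real N ^ 2 * (1 + real N * K)\<^sup>2"
  have Qpos: "0 < Q"
  proof -
    have a: "0 < 1 + real N * K" using K0 by (simp add: add_pos_nonneg)
    have b: "0 < real N" using N by simp
    show ?thesis unfolding Q_def using a b by simp
  qed
  have c0le1: "c0 \<le> th * (1 - th)" "c0 \<le> 2 * th * m" unfolding c0_def by auto
  have c00: "0 \<le> c0" unfolding c0_def using th m0 by auto
  have V0: "0 \<le> V" unfolding V_def by (simp add: sum_nonneg)
  have key: "\<exists>Y. X \<le> Q * Y \<and> c0 * Y \<le> th * (1 - th) * V + 2 * th * S"
    using cs
  proof
    assume ca: "(\<forall>i\<in>{1..N-1}. norm (c i) \<le> K * norm (z i)) \<and> m * (norm (z N))\<^sup>2 \<le> inner (z N) (c N)"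
    define s where "s = norm (z N) + (\<Sum>j\<in>I. norm (v j))"
    have zb: "norm (z i) \<le> s" if i: "1 \<le> i" "i \<le> N" for i
    proof -
      have tsum: "(\<Sum>j=i..N-1. v j) = z N - z i"
        unfolding v_def using i N sum_Suc_diff[of i "N-1" z] by simp
      have "norm (z i) = norm (z N - (\<Sum>j=i..N-1. v j))" unfolding tsum by simp
      also have "\<dots> \<le> norm (z N) + norm (\<Sum>j=i..N-1. v j)" by (rule norm_triangle_ineq4)
      also have "norm (\<Sum>j=i..N-1. v j) \<le> (\<Sum>j=i..N-1. norm (v j))" by (rule norm_sum)
      also have "(\<Sum>j=i..N-1. norm (v j)) \<le> (\<Sum>j\<in>I. norm (v j))"
        unfolding I_def using i by (intro sum_mono2) auto
      finally show ?thesis unfolding s_def by simp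
    qed
    have s0: "0 \<le> s" unfolding s_def by (simp add: sum_nonneg)
    have xb: "norm (x i) \<le> (1 + real N * K) * s" if i: "i \<in> I" for i
    proof -
      have i1: "1 \<le> i" "i \<le> N - 1" using i unfolding I_def by auto
      have "norm (x i) \<le> norm (z i) + norm (\<Sum>j=1..i. c j)" unfolding cum[OF i1] by (rule norm_triangle_ineq)
      also have "norm (\<Sum>j=1..i. c j) \<le> (\<Sum>j=1..i. norm (c j))" by (rule norm_sum)
      also have "(\<Sum>j=1..i. norm (c j)) \<le> (\<Sum>j=1..i. K * s)"
      proof (rule sum_mono)
        fix j assume j: "j \<in> {1..i}"
        then have "norm (c j) \<le> K * norm (z j)" using ca i1 by auto
        also have "\<dots> \<le> K * s" using zb[of j] j i1 K0 by (intro mult_left_mono) auto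
        finally show "norm (c j) \<le> K * s" .
      qed
      also have "(\<Sum>j=1..i. K * s) = real i * K * s" by simp
      also have "real i * K * s \<le> real N * K * s" using i1 K0 s0 by (intro mult_right_mono mult_right_mono) auto
      finally have "norm (x i) \<le> norm (z i) + real N * K * s" by simp
      moreover have "norm (z i) \<le> s" using zb[of i] i1 by simp
      ultimately show ?thesis by (simp add: algebra_simps)
    qed
    have "X \<le> real (card I) * ((1 + real N * K) * s)\<^sup>2" unfolding X_def by (rule sum_sq_bound[OF xb finI])
    also have "\<dots> \<le> real N * ((1 + real N * K) * s)\<^sup>2" using cardI by (intro mult_right_mono) auto
    finally have X1: "X \<le> real N * (1 + real N * K)\<^sup>2 * s\<^sup>2" by (simp add: power_mult_distrib mult.assoc)
    have "(\<Sum>j\<in>I. norm (v j))\<^sup>2 \<le> V * real (card I)" unfolding V_def by (rule sum_squared_le_sum_of_squares)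
    also have "\<dots> \<le> V * real N" using cardI V0 by (intro mult_left_mono) auto
    finally have vs: "(\<Sum>j\<in>I. norm (v j))\<^sup>2 \<le> V * real N" .
    have "s\<^sup>2 \<le> 2 * (norm (z N))\<^sup>2 + 2 * (\<Sum>j\<in>I. norm (v j))\<^sup>2"
      unfolding s_def using sum_squares_bound[of "norm (z N)" "\<Sum>j\<in>I. norm (v j)"]
      by (simp add: power2_eq_square algebra_simps)
    also have "\<dots> \<le> 2 * real N * ((norm (z N))\<^sup>2 + V)"
    proof -
      have "(norm (z N))\<^sup>2 \<le> real N * (norm (z N))\<^sup>2" using N by (simp add: mult_le_cancel_right1)
      then show ?thesis using vs by (simp add: algebra_simps)
    qed
    finally have s2: "s\<^sup>2 \<le> 2 * real N * ((norm (z N))\<^sup>2 + V)" .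
    have "X \<le> real N * (1 + real N * K)\<^sup>2 * (2 * real N * ((norm (z N))\<^sup>2 + V))"
      using X1 s2 by (smt (verit) mult_left_mono zero_le_power2 of_nat_0_le_iff mult_nonneg_nonneg)
    then have XQ: "X \<le> Q * ((norm (z N))\<^sup>2 + V)" unfolding Q_def by (simp add: power2_eq_square algebra_simps)
    have "inner (z N) (c N) \<le> S" unfolding S_def using N mono
      by (intro member_le_sum) auto
    then have "m * (norm (z N))\<^sup>2 \<le> S" using ca by simp
    then have "c0 * ((norm (z N))\<^sup>2 + V) \<le> th * (1 - th) * V + 2 * th * S"
    proof -
      assume mS: "m * (norm (z N))\<^sup>2 \<le> S"
      have "c0 * V \<le> th * (1 - th) * V" using c0le1 V0 by (intro mult_right_mono) auto
      moreover have "c0 * (norm (z N))\<^sup>2 \<le> 2 * th * m * (norm (z N))\<^sup>2" using c0le1 by (intro mult_right_mono) auto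
      moreover have "2 * th * m * (norm (z N))\<^sup>2 \<le> 2 * th * S" using mS th by (simp add: mult.assoc)
      ultimately show ?thesis by (simp add: algebra_simps)
    qed
    then show ?thesis using XQ by blast
  next
    assume cb: "\<forall>i\<in>{1..N-1}. norm (c i) \<le> K * norm (z i) \<and> m * (norm (z i))\<^sup>2 \<le> inner (z i) (c i)"
    define W where "W = (\<Sum>i\<in>I. (norm (z i))\<^sup>2)"
    define t where "t = (\<Sum>j\<in>I. norm (z j))"
    have t0: "0 \<le> t" unfolding t_def by (simp add: sum_nonneg)
    have W0: "0 \<le> W" unfolding W_def by (simp add: sum_nonneg)
    have xb: "norm (x i) \<le> (1 + real N * K) * t" if i: "i \<in> I" for i
    proof -
      have i1: "1 \<le> i" "i \<le> N - 1" using i unfolding I_def by auto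
      have zt: "norm (z i) \<le> t" unfolding t_def using i finI by (intro member_le_sum) auto
      have "norm (x i) \<le> norm (z i) + norm (\<Sum>j=1..i. c j)" unfolding cum[OF i1] by (rule norm_triangle_ineq)
      also have "norm (\<Sum>j=1..i. c j) \<le> (\<Sum>j=1..i. norm (c j))" by (rule norm_sum)
      also have "(\<Sum>j=1..i. norm (c j)) \<le> (\<Sum>j=1..i. K * norm (z j))"
        using cb i1 by (intro sum_mono) auto
      also have "(\<Sum>j=1..i. K * norm (z j)) = K * (\<Sum>j=1..i. norm (z j))" by (simp add: sum_distrib_left)
      also have "(\<Sum>j=1..i. norm (z j)) \<le> t" unfolding t_def I_def using i1 by (intro sum_mono2) auto
      finally have "norm (x i) \<le> t + K * t" using zt K0 by (smt (verit) mult_left_mono)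
      also have "\<dots> \<le> (1 + real N * K) * t"
      proof -
        have "K \<le> real N * K" using N K0 by (simp add: mult_le_cancel_right1)
        then have "K * t \<le> real N * K * t" using t0 by (rule mult_right_mono)
        then show ?thesis by (simp add: algebra_simps)
      qed
      finally show ?thesis .
    qed
    have "X \<le> real (card I) * ((1 + real N * K) * t)\<^sup>2" unfolding X_def by (rule sum_sq_bound[OF xb finI])
    also have "\<dots> \<le> real N * ((1 + real N * K) * t)\<^sup>2" using cardI by (intro mult_right_mono) auto
    finally have X1: "X \<le> real N * (1 + real N * K)\<^sup>2 * t\<^sup>2" by (simp add: power_mult_distrib mult.assoc)
    have "t\<^sup>2 \<le> W * real (card I)" unfolding t_def W_def by (rule sum_squared_le_sum_of_squares)
    also have "\<dots> \<le> W * real N" using cardI W0 by (intro mult_left_mono) auto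
    finally have tW: "t\<^sup>2 \<le> real N * W" by (simp add: mult.commute)
    have "X \<le> real N * (1 + real N * K)\<^sup>2 * (real N * W)"
      using X1 tW by (smt (verit) mult_left_mono zero_le_power2 of_nat_0_le_iff mult_nonneg_nonneg)
    also have "\<dots> \<le> Q * W"
    proof -
      define A where "A = real N ^ 2 * (1 + real N * K)\<^sup>2 * W"
      have A0: "0 \<le> A" unfolding A_def using W0 by simp
      have "real N * (1 + real N * K)\<^sup>2 * (real N * W) = A" unfolding A_def by (simp add: power2_eq_square mult_ac)
      moreover have "Q * W = 2 * A" unfolding Q_def A_def by (simp add: mult_ac)
      ultimately show ?thesis using A0 by simp
    qed
    finally have XQ: "X \<le> Q * W" .
    have "m * W \<le> (\<Sum>i\<in>I. inner (z i) (c i))" unfolding W_def sum_distrib_left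
      using cb unfolding I_def by (intro sum_mono) auto
    also have "\<dots> \<le> S" unfolding S_def I_def using mono by (intro sum_mono2) auto
    finally have mW: "m * W \<le> S" .
    have "c0 * W \<le> th * (1 - th) * V + 2 * th * S"
    proof -
      have "c0 * W \<le> 2 * th * m * W" using c0le1 W0 by (intro mult_right_mono) auto
      also have "\<dots> \<le> 2 * th * S" using mW th by (simp add: mult.assoc)
      also have "\<dots> \<le> th * (1 - th) * V + 2 * th * S" using th V0 by simp
      finally show ?thesis .
    qed
    then show ?thesis using XQ by blast
  qed
  then obtain Y where Y: "X \<le> Q * Y" "c0 * Y \<le> th * (1 - th) * V + 2 * th * S" by blast
  have dX: "mt_delta N th K m * X \<le> th * (1 - th) * V + 2 * th * S"
  proof -
    have "mt_delta N th K m * X = c0 * X / Q" unfolding mt_delta_def c0_def Q_def by simp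
    also have "\<dots> \<le> c0 * (Q * Y) / Q" using Y(1) c00 Qpos by (intro divide_right_mono mult_left_mono) auto
    also have "\<dots> = c0 * Y" using Qpos by simp
    finally show ?thesis using Y(2) by simp
  qed
  have "(\<Sum>i=1..N-1. (norm (x i + th *\<^sub>R (z (i+1) - z i)))\<^sup>2) = (\<Sum>i\<in>I. (norm (x i + th *\<^sub>R v i))\<^sup>2)"
    unfolding I_def v_def by simp
  also have "\<dots> \<le> X - mt_delta N th K m * X" using main dX by simp
  also have "\<dots> = (1 - mt_delta N th K m) * (\<Sum>i=1..N-1. (norm (x i))\<^sup>2)" unfolding X_def I_def by (simp add: algebra_simps)
  finally show ?thesis .
qed

lemma cum_lemma:
  fixes dx dz c :: "nat \<Rightarrow> 'a::real_vector"
  assumes N: "N \<ge> 2"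
    and r1: "dx 1 = dz 1 + c 1"
    and ri: "\<forall>i\<in>{2..N-1}. dx i + dz (i-1) - dx (i-1) = dz i + c i"
    and rN: "dz 1 + dz (N-1) - dx (N-1) = dz N + c N"
  shows "\<And>i. 1 \<le> i \<Longrightarrow> i \<le> N - 1 \<Longrightarrow> dx i = dz i + (\<Sum>j=1..i. c j)"
    and "dz 1 - dz N = (\<Sum>j=1..N. c j)"
proof -
  have cum: "dx i = dz i + (\<Sum>j=1..i. c j)" if "1 \<le> i" "i \<le> N - 1" for i
    using that
  proof (induction i rule: nat_induct_at_least)
    case base then show ?case using r1 by simp
  next
    case (Suc i)
    have "Suc i \<in> {2..N-1}" using Suc by auto
    then have "dx (Suc i) + dz i - dx i = dz (Suc i) + c (Suc i)" using ri by fastforce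
    moreover have "dx i = dz i + (\<Sum>j=1..i. c j)" using Suc by simp
    ultimately show ?case using Suc.hyps by (simp add: algebra_simps)
  qed
  then show "\<And>i. 1 \<le> i \<Longrightarrow> i \<le> N - 1 \<Longrightarrow> dx i = dz i + (\<Sum>j=1..i. c j)" by blast
  have "dx (N-1) = dz (N-1) + (\<Sum>j=1..N-1. c j)" using cum[of "N-1"] N by simp
  moreover have "(\<Sum>j=1..N. c j) = (\<Sum>j=1..N-1. c j) + c N"
  proof -
    obtain k where k: "N = Suc k" using N by (cases N) auto
    show ?thesis using N unfolding k by simp
  qed
  ultimately show "dz 1 - dz N = (\<Sum>j=1..N. c j)" using rN by (simp add: algebra_simps)
qed

lemma geo_bound:
  fixes e beta :: "nat \<Rightarrow> real" and rho :: real
  assumes step: "\<And>n. e (Suc n) \<le> (1 + beta n) * rho * e n"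
    and e0: "\<And>n. 0 \<le> e n" and b0: "\<And>n. 0 \<le> beta n" and r0: "0 \<le> rho"
  shows "e n \<le> e 0 * rho ^ n * exp (\<Sum>k<n. beta k)"
proof (induction n)
  case 0 then show ?case by simp
next
  case (Suc n)
  have "e (Suc n) \<le> (1 + beta n) * rho * e n" by (rule step)
  also have "\<dots> \<le> exp (beta n) * rho * e n"
    using e0 r0 by (intro mult_right_mono) (auto simp: exp_ge_add_one_self)
  also have "\<dots> \<le> exp (beta n) * rho * (e 0 * rho ^ n * exp (\<Sum>k<n. beta k))"
    using Suc.IH r0 by (intro mult_left_mono) auto
  also have "\<dots> = e 0 * rho ^ Suc n * exp (\<Sum>k<Suc n. beta k)"
    by (simp add: exp_add mult_ac)
  finally show ?case .
qed

lemma geo_sum_bound: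
  fixes q :: real
  assumes "0 \<le> q" "q < 1"
  shows "(\<Sum>k<n. q ^ k) \<le> 1 / (1 - q)"
proof -
  have "(\<Sum>k<n. q ^ k) = (1 - q ^ n) / (1 - q)" using assms sum_gp_strict[of q n] by simp
  also have "\<dots> \<le> 1 / (1 - q)" using assms by (intro divide_right_mono) auto
  finally show ?thesis .
qed

lemma rate_combine:
  fixes f :: "nat \<Rightarrow> real"
  assumes "\<And>n. f n \<le> A * rho ^ n + B * q ^ n" "0 \<le> A" "0 \<le> B" "0 < rho" "rho < 1" "0 < q" "q < 1"
  shows "\<exists>C r. C \<ge> 0 \<and> 0 < r \<and> r < 1 \<and> (\<forall>n. f n \<le> C * r ^ n)"
proof (intro exI conjI allI)
  let ?r = "max rho q"
  fix n
  have "rho ^ n \<le> ?r ^ n" "q ^ n \<le> ?r ^ n" using assms by (auto intro!: power_mono)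
  then have "A * rho ^ n + B * q ^ n \<le> A * ?r ^ n + B * ?r ^ n"
    using assms by (intro add_mono mult_left_mono) auto
  then show "f n \<le> (A + B) * ?r ^ n" using assms(1)[of n] by (simp add: algebra_simps)
qed (use assms in auto)

lemma tri3:
  fixes a b c :: "'a::real_normed_vector"
  shows "norm (a + b - c) \<le> norm a + norm b + norm c"
proof -
  have "norm (a + b - c) \<le> norm (a + b) + norm c" by (rule norm_triangle_ineq4)
  also have "norm (a + b) \<le> norm a + norm b" by (rule norm_triangle_ineq)
  finally show ?thesis by simp
qed

theorem corollary5p5:
  fixes F :: "nat \<Rightarrow> 'a::{real_inner, complete_space} \<Rightarrow> 'a"
    and B :: "'a \<Rightarrow> 'a set"
    and N :: nat and \<theta> L \<mu> a b gs :: real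
    and \<gamma> :: "nat \<Rightarrow> real"
    and x w z :: "nat \<Rightarrow> nat \<Rightarrow> 'a"
  defines "A \<equiv> ops N F B"
  assumes N2: "N \<ge> 2"
    and \<theta>: "0 < \<theta>" "\<theta> < 1"
    and \<Gamma>: "0 < a" "a \<le> b"
    and \<mu>: "\<mu> > 0"
    and hyp: "((\<forall>i\<in>{1..N-1}. monotone_op (sv (F i)) \<and> L-lipschitz_on UNIV (F i))
                 \<and> maximally_monotone_op B \<and> strongly_monotone_op \<mu> B)
            \<or> ((\<forall>i\<in>{1..N-1}. maximally_monotone_op (sv (F i)) \<and> strongly_monotone_op \<mu> (sv (F i))
                     \<and> L-lipschitz_on UNIV (F i))
                 \<and> maximally_monotone_op B)"
    and zer_ne: "zer (opsum N A) \<noteq> {}"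
    and \<gamma>_in: "\<forall>n. \<gamma> n \<in> {a..b}"
    and gs_in: "gs \<in> {a..b}"
    and \<gamma>_conv: "rlinear_real \<gamma> gs"
    and init: "z 0 1 = resolvent (\<gamma> 0) (A 1) (x 0 1)"
    and zi: "\<forall>n. \<forall>i\<in>{2..N-1}. z n i = resolvent (\<gamma> n) (A i) (x n i + z n (i - 1) - x n (i - 1))"
    and zN: "\<forall>n. z n N = resolvent (\<gamma> n) (A N) (z n 1 + z n (N - 1) - x n (N - 1))"
    and wn: "\<forall>n. \<forall>i\<in>{1..N-1}. w n i = x n i + \<theta> *\<^sub>R (z n (i + 1) - z n i)"
    and z1: "\<forall>n. z (Suc n) 1 = resolvent (\<gamma> n) (A 1) (w n 1)"
    and x1: "\<forall>n. x (Suc n) 1 = (\<gamma> (Suc n) / \<gamma> n) *\<^sub>R w n 1 + (1 - \<gamma> (Suc n) / \<gamma> n) *\<^sub>R z (Suc n) 1"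
    and xi: "\<forall>n. \<forall>i\<in>{2..N-1}. x (Suc n) i = (\<gamma> (Suc n) / \<gamma> n) *\<^sub>R (w n i - w n 1) + x (Suc n) 1"
  shows "\<exists>xs :: nat \<Rightarrow> 'a.
            xs \<in> mt_fix N A gs \<theta>
          \<and> rlinear_vec {1..N-1} x xs \<and> rlinear_vec {1..N-1} w xs
          \<and> rlinear_vec {1..N} z (\<lambda>_. resolvent gs (A 1) (xs 1))
          \<and> resolvent gs (A 1) (xs 1) \<in> zer (opsum N A)"
proof -
  define I where "I = {1..N-1}"
  have finI: "finite I" unfolding I_def by simp
  have I1: "1 \<in> I" unfolding I_def using N2 by simp
  have A_N: "A N = B" unfolding A_def ops_def by simp
  have A_i: "A i = sv (F i)" if "i \<noteq> N" for i unfolding A_def ops_def using that by simp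
  have A1: "A 1 = sv (F 1)" using N2 A_i by simp
  have a0: "0 < a" using \<Gamma> by simp
  have gle: "a \<le> \<gamma> n" "\<gamma> n \<le> b" for n using \<gamma>_in by auto
  have gpos: "0 < \<gamma> n" for n using gle(1)[of n] a0 by simp
  have gs_pos: "0 < gs" using gs_in a0 by simp
  have b0: "0 < b" using \<Gamma> by simp
  have lipF: "L-lipschitz_on UNIV (F i)" if "i \<in> I" for i using hyp that unfolding I_def by blast
  have L0: "0 \<le> L" using lipF[OF I1] unfolding lipschitz_on_def by simp
  have monF: "monotone_op (sv (F i))" if "i \<in> I" for i
    using hyp that unfolding I_def maximally_monotone_op_def by blast
  have mmF: "maximally_monotone_op (sv (F i))" if "i \<in> I" for i
    using hyp lip_mono_max[OF monF[OF that] lipF[OF that]] that unfolding I_def by blast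
  have mmB: "maximally_monotone_op B" using hyp by blast
  have monB: "monotone_op B" using mmB unfolding maximally_monotone_op_def by simp
  have iI: "i \<in> I" if "1 \<le> i" "i \<le> N - 1" for i unfolding I_def using that by simp
  have iN: "i \<noteq> N" if "i \<in> I" for i using that N2 unfolding I_def by auto
  obtain zs where zs: "zs \<in> zer (opsum N A)" using zer_ne by blast
  then obtain u where u: "0 = (\<Sum>i=1..N. u i)" "\<forall>i\<in>{1..N}. u i \<in> A i zs"
    unfolding zer_def opsum_def by auto
  have uF: "u i = F i zs" if "i \<in> I" for i
  proof -
    have "i \<in> {1..N}" using that unfolding I_def by auto
    then have "u i \<in> A i zs" using u(2) by blast
    then show ?thesis using A_i[OF iN[OF that]] unfolding sv_def by simp
  qed
  have uN: "u N \<in> B zs" using u(2) A_N N2 by force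
  define U where "U i = (\<Sum>j=1..i. u j)" for i
  define Xs where "Xs g i = zs + g *\<^sub>R U i" for g i
  have U_Suc: "U (Suc i) = U i + u (Suc i)" for i unfolding U_def by simp
  have FP1: "Xs g 1 = zs + g *\<^sub>R F 1 zs" for g unfolding Xs_def U_def using uF[OF I1] by simp
  have FPi: "Xs g i + zs - Xs g (i-1) = zs + g *\<^sub>R F i zs" if "i \<in> {2..N-1}" for g i
  proof -
    have "i \<noteq> 0" using that by auto
    then obtain k where k: "i = Suc k" using not0_implies_Suc by blast
    have "i \<in> I" using that unfolding I_def by auto
    then show ?thesis unfolding Xs_def k U_Suc using uF k by (simp add: algebra_simps)
  qed
  have FPN: "zs + zs - Xs g (N-1) = zs + g *\<^sub>R u N" for g
  proof -
    have "N \<noteq> 0" using N2 by auto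
    then obtain k where k: "N = Suc k" using not0_implies_Suc by blast
    have "U N = 0" unfolding U_def using u(1) by simp
    then have "U (N-1) = - u N" unfolding k U_Suc by (simp add: eq_neg_iff_add_eq_0)
    then show ?thesis unfolding Xs_def by (simp add: algebra_simps)
  qed
  have R1: "x n 1 = z n 1 + \<gamma> n *\<^sub>R F 1 (z n 1)" for n
  proof (cases n)
    case 0
    show ?thesis unfolding 0 init A1 by (rule res_sv[OF mmF[OF I1] gpos])
  next
    case (Suc m)
    define z' where "z' = z (Suc m) 1"
    have wz: "w m 1 = z' + \<gamma> m *\<^sub>R F 1 z'" unfolding z'_def z1[rule_format] A1 by (rule res_sv[OF mmF[OF I1] gpos])
    have "x (Suc m) 1 = (\<gamma> (Suc m) / \<gamma> m) *\<^sub>R w m 1 + (1 - \<gamma> (Suc m) / \<gamma> m) *\<^sub>R z'"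
      unfolding z'_def by (rule x1[rule_format])
    also have "\<dots> = z' + ((\<gamma> (Suc m) / \<gamma> m) * \<gamma> m) *\<^sub>R F 1 z'" unfolding wz by (simp add: algebra_simps)
    also have "(\<gamma> (Suc m) / \<gamma> m) * \<gamma> m = \<gamma> (Suc m)" using gpos[of m] by simp
    finally show ?thesis unfolding Suc z'_def .
  qed
  have Ri: "x n i + z n (i-1) - x n (i-1) = z n i + \<gamma> n *\<^sub>R F i (z n i)" if i: "i \<in> {2..N-1}" for n i
  proof -
    have iI': "i \<in> I" using i unfolding I_def by auto
    have "z n i = resolvent (\<gamma> n) (sv (F i)) (x n i + z n (i - 1) - x n (i - 1))"
      using zi i A_i[OF iN[OF iI']] by simp
    then show ?thesis using res_sv[OF mmF[OF iI'] gpos[of n], of "x n i + z n (i - 1) - x n (i - 1)"] by simp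
  qed
  have "\<forall>n. \<exists>bb. bb \<in> B (z n N) \<and> z n 1 + z n (N-1) - x n (N-1) = z n N + \<gamma> n *\<^sub>R bb"
  proof
    fix n
    have "z n N = resolvent (\<gamma> n) B (z n 1 + z n (N - 1) - x n (N - 1))" using zN A_N by simp
    then show "\<exists>bb. bb \<in> B (z n N) \<and> z n 1 + z n (N-1) - x n (N-1) = z n N + \<gamma> n *\<^sub>R bb"
      using res_spec[OF mmB gpos[of n], of "z n 1 + z n (N - 1) - x n (N - 1)"] by auto
  qed
  from choice[OF this] obtain bN where bN: "\<And>n. bN n \<in> B (z n N)"
    "\<And>n. z n 1 + z n (N-1) - x n (N-1) = z n N + \<gamma> n *\<^sub>R bN n" by blast
  define K where "K = b * L"
  define m where "m = a * \<mu>"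
  have K0: "0 \<le> K" unfolding K_def using b0 L0 by simp
  have m0: "0 < m" unfolding m_def using a0 \<mu> by simp
  have dpos: "0 < mt_delta N \<theta> K m" using mt_delta_pos[OF N2 \<theta> K0 m0] .
  define dl where "dl = min (mt_delta N \<theta> K m) (1/2)"
  define \<rho> where "\<rho> = sqrt (1 - dl)"
  have dl: "0 < dl" "dl \<le> 1/2" "dl \<le> mt_delta N \<theta> K m" unfolding dl_def using dpos by auto
  have rho: "0 < \<rho>" "\<rho> < 1" unfolding \<rho>_def using dl by auto
  have rho2: "\<rho>\<^sup>2 = 1 - dl" unfolding \<rho>_def using dl by simp
  define e where "e n = L2_set (\<lambda>i. norm (x n i - Xs (\<gamma> n) i)) I" for n
  define ew where "ew n = L2_set (\<lambda>i. norm (w n i - Xs (\<gamma> n) i)) I" for n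
  have e0: "0 \<le> e n" for n unfolding e_def by simp
  have ew0: "0 \<le> ew n" for n unfolding ew_def by simp
  have contr: "ew n \<le> \<rho> * e n" for n
  proof -
    define dx where "dx i = x n i - Xs (\<gamma> n) i" for i
    define dz where "dz i = z n i - zs" for i
    define c where "c j = (if j = N then \<gamma> n *\<^sub>R (bN n - u N) else \<gamma> n *\<^sub>R (F j (z n j) - F j zs))" for j
    have r1: "dx 1 = dz 1 + c 1" unfolding dx_def dz_def c_def using R1[of n] FP1[of "\<gamma> n"] N2
      by (simp add: algebra_simps)
    have ri: "\<forall>i\<in>{2..N-1}. dx i + dz (i-1) - dx (i-1) = dz i + c i"
    proof
      fix i assume i: "i \<in> {2..N-1}"
      have "i \<noteq> N" using i by auto
      then show "dx i + dz (i-1) - dx (i-1) = dz i + c i"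
        unfolding dx_def dz_def c_def using Ri[OF i, of n] FPi[OF i, of "\<gamma> n"]
        by (simp add: algebra_simps)
    qed
    have rN: "dz 1 + dz (N-1) - dx (N-1) = dz N + c N"
      unfolding dx_def dz_def c_def using bN(2)[of n] FPN[of "\<gamma> n"] by (simp add: algebra_simps)
    note cl = cum_lemma[OF N2 r1 ri rN]
    have mono: "0 \<le> inner (dz i) (c i)" if "1 \<le> i" "i \<le> N" for i
    proof (cases "i = N")
      case True
      have "0 \<le> inner (z n N - zs) (bN n - u N)" using monB bN(1) uN unfolding monotone_op_def by blast
      then show ?thesis unfolding True dz_def c_def using gpos[of n] by simp
    next
      case False
      then have iI': "i \<in> I" using that unfolding I_def by auto
      have "0 \<le> inner (z n i - zs) (F i (z n i) - F i zs)"
        using monF[OF iI'] unfolding monotone_op_def sv_def by blast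
      then show ?thesis unfolding dz_def c_def using False gpos[of n] by simp
    qed
    have cK: "norm (c i) \<le> K * norm (dz i)" if "i \<in> {1..N-1}" for i
    proof -
      have iI': "i \<in> I" using that unfolding I_def by auto
      have "norm (F i (z n i) - F i zs) \<le> L * norm (z n i - zs)"
        using lipschitz_onD[OF lipF[OF iI'], of "z n i" zs] unfolding dist_norm by simp
      then have "\<gamma> n * norm (F i (z n i) - F i zs) \<le> b * (L * norm (z n i - zs))"
        using gle[of n] gpos[of n] L0 by (intro mult_mono) auto
      then show ?thesis unfolding c_def dz_def K_def using iN[OF iI'] gpos[of n] by (simp add: mult.assoc)
    qed
    have cs: "((\<forall>i\<in>{1..N-1}. norm (c i) \<le> K * norm (dz i)) \<and> m * (norm (dz N))\<^sup>2 \<le> inner (dz N) (c N))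
          \<or> (\<forall>i\<in>{1..N-1}. norm (c i) \<le> K * norm (dz i) \<and> m * (norm (dz i))\<^sup>2 \<le> inner (dz i) (c i))"
      using hyp
    proof
      assume ha: "(\<forall>i\<in>{1..N-1}. monotone_op (sv (F i)) \<and> L-lipschitz_on UNIV (F i))
                 \<and> maximally_monotone_op B \<and> strongly_monotone_op \<mu> B"
      have "\<mu> * (norm (z n N - zs))\<^sup>2 \<le> inner (z n N - zs) (bN n - u N)"
        using ha bN(1) uN unfolding strongly_monotone_op_def by blast
      then have "\<gamma> n * (\<mu> * (norm (z n N - zs))\<^sup>2) \<le> \<gamma> n * inner (z n N - zs) (bN n - u N)"
        using gpos[of n] by (intro mult_left_mono) auto
      moreover have "a * (\<mu> * (norm (z n N - zs))\<^sup>2) \<le> \<gamma> n * (\<mu> * (norm (z n N - zs))\<^sup>2)"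
        using gle[of n] \<mu> by (intro mult_right_mono) auto
      ultimately have "m * (norm (dz N))\<^sup>2 \<le> inner (dz N) (c N)"
        unfolding m_def dz_def c_def by (simp add: mult.assoc)
      then show ?thesis using cK by blast
    next
      assume hb: "(\<forall>i\<in>{1..N-1}. maximally_monotone_op (sv (F i)) \<and> strongly_monotone_op \<mu> (sv (F i))
                     \<and> L-lipschitz_on UNIV (F i)) \<and> maximally_monotone_op B"
      have "m * (norm (dz i))\<^sup>2 \<le> inner (dz i) (c i)" if i: "i \<in> {1..N-1}" for i
      proof -
        have iI': "i \<in> I" using i unfolding I_def by auto
        have "\<mu> * (norm (z n i - zs))\<^sup>2 \<le> inner (z n i - zs) (F i (z n i) - F i zs)"
          using hb i unfolding strongly_monotone_op_def sv_def by blast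
        then have "\<gamma> n * (\<mu> * (norm (z n i - zs))\<^sup>2) \<le> \<gamma> n * inner (z n i - zs) (F i (z n i) - F i zs)"
          using gpos[of n] by (intro mult_left_mono) auto
        moreover have "a * (\<mu> * (norm (z n i - zs))\<^sup>2) \<le> \<gamma> n * (\<mu> * (norm (z n i - zs))\<^sup>2)"
          using gle[of n] \<mu> by (intro mult_right_mono) auto
        ultimately show ?thesis unfolding m_def dz_def c_def using iN[OF iI'] by (simp add: mult.assoc)
      qed
      then show ?thesis using cK by blast
    qed
    have mc: "(\<Sum>i=1..N-1. (norm (dx i + \<theta> *\<^sub>R (dz (i+1) - dz i)))\<^sup>2) \<le> (1 - mt_delta N \<theta> K m) * (\<Sum>i=1..N-1. (norm (dx i))\<^sup>2)"
      by (rule mt_contract[OF N2 \<theta> cl(1) cl(2) mono K0 m0 cs])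
    have weq: "w n i - Xs (\<gamma> n) i = dx i + \<theta> *\<^sub>R (dz (i+1) - dz i)" if "i \<in> I" for i
      using wn that unfolding I_def dx_def dz_def by (simp add: algebra_simps)
    have "(ew n)\<^sup>2 = (\<Sum>i\<in>I. (norm (dx i + \<theta> *\<^sub>R (dz (i+1) - dz i)))\<^sup>2)"
      unfolding ew_def L2_set_def using weq by (simp add: sum_nonneg)
    also have "\<dots> \<le> (1 - mt_delta N \<theta> K m) * (\<Sum>i\<in>I. (norm (dx i))\<^sup>2)" using mc unfolding I_def .
    also have "\<dots> \<le> (1 - dl) * (\<Sum>i\<in>I. (norm (dx i))\<^sup>2)" using dl by (intro mult_right_mono) (auto simp: sum_nonneg)
    also have "\<dots> = (\<rho> * e n)\<^sup>2" unfolding rho2[symmetric] e_def L2_set_def dx_def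
      by (simp add: power_mult_distrib sum_nonneg)
    finally have "(ew n)\<^sup>2 \<le> (\<rho> * e n)\<^sup>2" .
    moreover have "0 \<le> \<rho> * e n" using rho(1) e0[of n] by simp
    ultimately show ?thesis by (rule power2_le_imp_le)
  qed
  define rr where "rr n = \<gamma> (Suc n) / \<gamma> n" for n
  have rrg: "rr n * \<gamma> n = \<gamma> (Suc n)" for n unfolding rr_def using gpos[of n] by simp
  have zsJ1: "resolvent g (A 1) (Xs g 1) = zs" if "0 < g" for g
    unfolding A1 FP1 by (rule res_unique[OF monF[OF I1] that]) (auto simp: sv_def)
  have reloc: "e (Suc n) \<le> (1 + real (N+1) * \<bar>rr n - 1\<bar>) * ew n" for n
  proof -
    define z' where "z' = z (Suc n) 1"
    define dw where "dw i = w n i - Xs (\<gamma> n) i" for i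
    define r1 where "r1 = \<bar>rr n - 1\<bar>"
    have r10: "0 \<le> r1" unfolding r1_def by simp
    have x1': "x (Suc n) 1 = rr n *\<^sub>R w n 1 + (1 - rr n) *\<^sub>R z'" using x1 unfolding rr_def z'_def by simp
    have xf: "x (Suc n) i = rr n *\<^sub>R w n i + (1 - rr n) *\<^sub>R z'" if i: "i \<in> I" for i
    proof (cases "i = 1")
      case True then show ?thesis using x1' by simp
    next
      case False
      then have "i \<in> {2..N-1}" using i unfolding I_def by auto
      then have "x (Suc n) i = rr n *\<^sub>R (w n i - w n 1) + x (Suc n) 1" using xi unfolding rr_def by simp
      then show ?thesis unfolding x1' by (simp add: algebra_simps)
    qed
    have Xf: "Xs (\<gamma> (Suc n)) i = rr n *\<^sub>R Xs (\<gamma> n) i + (1 - rr n) *\<^sub>R zs" for i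
      unfolding Xs_def rrg[symmetric] by (simp add: algebra_simps)
    have df: "x (Suc n) i - Xs (\<gamma> (Suc n)) i = dw i + (rr n - 1) *\<^sub>R (dw i - (z' - zs))" if "i \<in> I" for i
      unfolding xf[OF that] Xf dw_def by (simp add: algebra_simps)
    have zz: "norm (z' - zs) \<le> norm (dw 1)"
    proof -
      have "z' = resolvent (\<gamma> n) (A 1) (w n 1)" unfolding z'_def using z1 by simp
      then have "z' - zs = resolvent (\<gamma> n) (A 1) (w n 1) - resolvent (\<gamma> n) (A 1) (Xs (\<gamma> n) 1)"
        using zsJ1[OF gpos[of n]] by simp
      then show ?thesis unfolding dw_def A1 using res_nonexp[OF mmF[OF I1] gpos[of n]] by simp
    qed
    have dw1: "norm (dw 1) \<le> ew n" unfolding ew_def dw_def using finI I1 by (rule member_le_L2_set)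
    have pt: "norm (x (Suc n) i - Xs (\<gamma> (Suc n)) i) \<le> (norm (dw i) + r1 * norm (dw i)) + r1 * ew n"
      if "i \<in> I" for i
    proof -
      have "norm (x (Suc n) i - Xs (\<gamma> (Suc n)) i) \<le> norm (dw i) + norm ((rr n - 1) *\<^sub>R (dw i - (z' - zs)))"
        unfolding df[OF that] by (rule norm_triangle_ineq)
      moreover have "norm ((rr n - 1) *\<^sub>R (dw i - (z' - zs))) = r1 * norm (dw i - (z' - zs))"
        unfolding r1_def by simp
      moreover have "norm (dw i - (z' - zs)) \<le> norm (dw i) + ew n"
        using norm_triangle_ineq4[of "dw i" "z' - zs"] zz dw1 by linarith
      then have "r1 * norm (dw i - (z' - zs)) \<le> r1 * (norm (dw i) + ew n)" using r10 by (rule mult_left_mono)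
      ultimately show ?thesis by (simp add: algebra_simps)
    qed
    have "e (Suc n) \<le> L2_set (\<lambda>i. (norm (dw i) + r1 * norm (dw i)) + r1 * ew n) I"
      unfolding e_def by (rule L2_set_mono[OF pt norm_ge_zero])
    also have "\<dots> \<le> L2_set (\<lambda>i. norm (dw i) + r1 * norm (dw i)) I + L2_set (\<lambda>i. r1 * ew n) I"
      by (rule L2_set_triangle_ineq)
    also have "L2_set (\<lambda>i. norm (dw i) + r1 * norm (dw i)) I \<le> L2_set (\<lambda>i. norm (dw i)) I + L2_set (\<lambda>i. r1 * norm (dw i)) I"
      by (rule L2_set_triangle_ineq)
    also have "L2_set (\<lambda>i. r1 * norm (dw i)) I = r1 * ew n"
      unfolding ew_def dw_def by (rule L2_set_right_distrib[OF r10, symmetric])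
    also have "L2_set (\<lambda>i. norm (dw i)) I = ew n" unfolding ew_def dw_def by simp
    also have "L2_set (\<lambda>i. r1 * ew n) I = sqrt (real (card I)) * (r1 * ew n)"
      using r10 ew0[of n] by (simp add: L2_set_constant)
    also have "sqrt (real (card I)) * (r1 * ew n) \<le> real N * (r1 * ew n)"
    proof (rule mult_right_mono)
      have c1: "card I \<le> N" unfolding I_def by simp
      have c2: "N \<le> N * N" by (rule le_square)
      have "card I \<le> N * N" using c1 c2 by (rule le_trans)
      then have "real (card I) \<le> real (N * N)" by (rule of_nat_mono)
      then have "real (card I) \<le> (real N)\<^sup>2" by (simp add: power2_eq_square)
      then have "sqrt (real (card I)) \<le> sqrt ((real N)\<^sup>2)" by (rule real_sqrt_le_mono)
      then show "sqrt (real (card I)) \<le> real N" by simp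
    qed (use r10 ew0[of n] in simp)
    finally show ?thesis unfolding r1_def by (simp add: algebra_simps)
  qed
  obtain Cg qg where Cg: "Cg \<ge> 0" "0 < qg" "qg < 1" "\<And>n. \<bar>\<gamma> n - gs\<bar> \<le> Cg * qg ^ n"
    using \<gamma>_conv unfolding rlinear_real_def by blast
  have rr_b: "\<bar>rr n - 1\<bar> \<le> 2 * Cg * qg ^ n / a" for n
  proof -
    have eq: "rr n - 1 = (\<gamma> (Suc n) - \<gamma> n) / \<gamma> n" unfolding rr_def using gpos[of n] by (simp add: field_simps)
    have "\<bar>\<gamma> (Suc n) - \<gamma> n\<bar> \<le> \<bar>\<gamma> (Suc n) - gs\<bar> + \<bar>\<gamma> n - gs\<bar>" by simp
    also have "\<dots> \<le> Cg * qg ^ Suc n + Cg * qg ^ n" by (rule add_mono[OF Cg(4) Cg(4)])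
    also have "Cg * qg ^ Suc n \<le> Cg * qg ^ n"
      using Cg by (intro mult_left_mono power_decreasing) auto
    finally have num: "\<bar>\<gamma> (Suc n) - \<gamma> n\<bar> \<le> 2 * Cg * qg ^ n" by simp
    have "\<bar>rr n - 1\<bar> = \<bar>\<gamma> (Suc n) - \<gamma> n\<bar> / \<gamma> n" unfolding eq using gpos[of n] by simp
    also have "\<dots> \<le> 2 * Cg * qg ^ n / \<gamma> n" using num gpos[of n] by (simp add: divide_right_mono)
    also have "\<dots> \<le> 2 * Cg * qg ^ n / a" using a0 gle(1)[of n] Cg by (intro divide_left_mono) auto
    finally show ?thesis .
  qed
  define \<beta> where "\<beta> n = real (N+1) * (2 * Cg * qg ^ n / a)" for n
  have \<beta>0: "0 \<le> \<beta> n" for n unfolding \<beta>_def using Cg a0 by simp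
  have step: "e (Suc n) \<le> (1 + \<beta> n) * \<rho> * e n" for n
  proof -
    have "e (Suc n) \<le> (1 + real (N+1) * \<bar>rr n - 1\<bar>) * ew n" by (rule reloc)
    also have "\<dots> \<le> (1 + \<beta> n) * ew n" unfolding \<beta>_def using rr_b[of n] ew0[of n]
      by (intro mult_right_mono add_left_mono mult_left_mono) auto
    also have "\<dots> \<le> (1 + \<beta> n) * (\<rho> * e n)" using contr[of n] \<beta>0[of n] by (intro mult_left_mono) auto
    finally show ?thesis by (simp add: mult.assoc)
  qed
  have eb1: "e n \<le> e 0 * \<rho> ^ n * exp (\<Sum>k<n. \<beta> k)" for n
    by (rule geo_bound[where e=e and beta=\<beta> and rho=\<rho>, OF step e0 \<beta>0]) (use rho in simp)
  define Bb where "Bb = real (N+1) * (2 * Cg / a) * (1 / (1 - qg))"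
  have sb: "(\<Sum>k<n. \<beta> k) \<le> Bb" for n
  proof -
    have bk: "\<beta> k = real (N+1) * (2 * Cg / a) * qg ^ k" for k unfolding \<beta>_def by simp
    have "(\<Sum>k<n. \<beta> k) = real (N+1) * (2 * Cg / a) * (\<Sum>k<n. qg ^ k)"
      unfolding bk by (rule sum_distrib_left[symmetric])
    also have "\<dots> \<le> real (N+1) * (2 * Cg / a) * (1 / (1 - qg))"
      using geo_sum_bound[of qg n] Cg a0 by (intro mult_left_mono) auto
    finally show ?thesis unfolding Bb_def .
  qed
  define M0 where "M0 = e 0 * exp Bb"
  have M00: "0 \<le> M0" unfolding M0_def using e0[of 0] by simp
  have eb: "e n \<le> M0 * \<rho> ^ n" for n
  proof -
    have "e n \<le> e 0 * \<rho> ^ n * exp (\<Sum>k<n. \<beta> k)" by (rule eb1)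
    also have "\<dots> \<le> e 0 * \<rho> ^ n * exp Bb" using sb[of n] e0[of 0] rho by (intro mult_left_mono) auto
    finally show ?thesis unfolding M0_def by (simp add: mult_ac)
  qed
  have dxb: "norm (x n j - Xs (\<gamma> n) j) \<le> e n" if "j \<in> I" for n j
    unfolding e_def using finI that by (rule member_le_L2_set)
  have z1b: "norm (z n 1 - zs) \<le> e n" for n
  proof -
    have "z n 1 = resolvent (\<gamma> n) (A 1) (x n 1)"
      unfolding A1 by (rule res_unique[symmetric, OF monF[OF I1] gpos[of n] _ R1[of n]]) (simp add: sv_def)
    then have "z n 1 - zs = resolvent (\<gamma> n) (A 1) (x n 1) - resolvent (\<gamma> n) (A 1) (Xs (\<gamma> n) 1)"
      using zsJ1[OF gpos[of n]] by simp
    also have "norm \<dots> \<le> norm (x n 1 - Xs (\<gamma> n) 1)" unfolding A1 by (rule res_nonexp[OF mmF[OF I1] gpos[of n]])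
    finally show ?thesis using dxb[OF I1, of n] by simp
  qed
  have zib: "norm (z n j - zs) \<le> real (2 * j) * e n" if "1 \<le> j" "j \<le> N - 1" for n j
    using that
  proof (induction j rule: nat_induct_at_least)
    case base then show ?case using z1b[of n] e0[of n] by simp
  next
    case (Suc j)
    have sj: "Suc j \<in> {2..N-1}" using Suc by auto
    have sjI: "Suc j \<in> I" using sj unfolding I_def by auto
    have jI: "j \<in> I" using Suc unfolding I_def by auto
    have Ae: "A (Suc j) = sv (F (Suc j))" using A_i[OF iN[OF sjI]] .
    have q1: "z n (Suc j) = resolvent (\<gamma> n) (A (Suc j)) (x n (Suc j) + z n j - x n j)" using zi sj by force
    have q2: "zs = resolvent (\<gamma> n) (A (Suc j)) (Xs (\<gamma> n) (Suc j) + zs - Xs (\<gamma> n) j)"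
      unfolding Ae using FPi[OF sj, of "\<gamma> n"]
      by (intro res_unique[symmetric, OF monF[OF sjI] gpos[of n]]) (auto simp: sv_def)
    have "norm (z n (Suc j) - zs) = norm (resolvent (\<gamma> n) (A (Suc j)) (x n (Suc j) + z n j - x n j)
        - resolvent (\<gamma> n) (A (Suc j)) (Xs (\<gamma> n) (Suc j) + zs - Xs (\<gamma> n) j))"
      by (simp only: q1[symmetric] q2[symmetric])
    also have "\<dots> \<le> norm ((x n (Suc j) + z n j - x n j) - (Xs (\<gamma> n) (Suc j) + zs - Xs (\<gamma> n) j))"
      unfolding Ae by (rule res_nonexp[OF mmF[OF sjI] gpos[of n]])
    finally have "norm (z n (Suc j) - zs) \<le> norm ((x n (Suc j) + z n j - x n j) - (Xs (\<gamma> n) (Suc j) + zs - Xs (\<gamma> n) j))" .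
    also have "(x n (Suc j) + z n j - x n j) - (Xs (\<gamma> n) (Suc j) + zs - Xs (\<gamma> n) j)
        = (x n (Suc j) - Xs (\<gamma> n) (Suc j)) + (z n j - zs) - (x n j - Xs (\<gamma> n) j)" by (simp add: algebra_simps)
    also have "norm \<dots> \<le> norm (x n (Suc j) - Xs (\<gamma> n) (Suc j)) + norm (z n j - zs) + norm (x n j - Xs (\<gamma> n) j)"
      by (rule tri3)
    also have "\<dots> \<le> e n + real (2 * j) * e n + e n"
      using dxb[OF sjI, of n] dxb[OF jI, of n] Suc.IH Suc.hyps Suc.prems by (intro add_mono) auto
    finally show ?case by (simp add: algebra_simps)
  qed
  have zNb: "norm (z n N - zs) \<le> real (2 * N) * e n" for n
  proof -
    have NI: "N - 1 \<in> I" unfolding I_def using N2 by simp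
    have q1: "z n N = resolvent (\<gamma> n) B (z n 1 + z n (N-1) - x n (N-1))" using zN A_N by simp
    have q2: "zs = resolvent (\<gamma> n) B (zs + zs - Xs (\<gamma> n) (N-1))"
      using FPN[of "\<gamma> n"] by (intro res_unique[symmetric, OF monB gpos[of n] uN]) simp
    have "norm (z n N - zs) = norm (resolvent (\<gamma> n) B (z n 1 + z n (N-1) - x n (N-1))
         - resolvent (\<gamma> n) B (zs + zs - Xs (\<gamma> n) (N-1)))"
      by (simp only: q1[symmetric] q2[symmetric])
    also have "\<dots> \<le> norm ((z n 1 + z n (N-1) - x n (N-1)) - (zs + zs - Xs (\<gamma> n) (N-1)))"
      by (rule res_nonexp[OF mmB gpos[of n]])
    finally have "norm (z n N - zs) \<le> norm ((z n 1 + z n (N-1) - x n (N-1)) - (zs + zs - Xs (\<gamma> n) (N-1)))" .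
    also have "(z n 1 + z n (N-1) - x n (N-1)) - (zs + zs - Xs (\<gamma> n) (N-1))
        = (z n 1 - zs) + (z n (N-1) - zs) - (x n (N-1) - Xs (\<gamma> n) (N-1))" by (simp add: algebra_simps)
    also have "norm \<dots> \<le> norm (z n 1 - zs) + norm (z n (N-1) - zs) + norm (x n (N-1) - Xs (\<gamma> n) (N-1))"
      by (rule tri3)
    also have "\<dots> \<le> e n + real (2 * (N-1)) * e n + e n"
      using z1b[of n] zib[of "N-1" n] dxb[OF NI, of n] N2 by (intro add_mono) auto
    also have "\<dots> = real (2 * N) * e n" using N2 by (simp add: algebra_simps of_nat_diff)
    finally show ?thesis .
  qed
  have zb: "norm (z n i - zs) \<le> real (2 * N) * e n" if "i \<in> {1..N}" for n i
  proof (cases "i = N")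
    case True then show ?thesis using zNb by simp
  next
    case False
    then have "1 \<le> i" "i \<le> N - 1" using that by auto
    then have "norm (z n i - zs) \<le> real (2 * i) * e n" by (rule zib)
    also have "\<dots> \<le> real (2 * N) * e n" using that e0[of n] by (intro mult_right_mono) auto
    finally show ?thesis .
  qed
  define xs where "xs = Xs gs"
  define Unm where "Unm = L2_set (\<lambda>i. norm (U i)) I"
  have Unm0: "0 \<le> Unm" unfolding Unm_def by simp
  have zsJ: "resolvent gs (A 1) (xs 1) = zs" unfolding xs_def by (rule zsJ1[OF gs_pos])
  have L2U: "L2_set (\<lambda>i. norm (p i - xs i)) I \<le> L2_set (\<lambda>i. norm (p i - Xs (\<gamma> n) i)) I + Cg * qg ^ n * Unm"
    for p :: "nat \<Rightarrow> 'a" and n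
  proof -
    have pt: "norm (p i - xs i) \<le> norm (p i - Xs (\<gamma> n) i) + \<bar>\<gamma> n - gs\<bar> * norm (U i)" for i
    proof -
      have eq: "p i - xs i = (p i - Xs (\<gamma> n) i) + (\<gamma> n - gs) *\<^sub>R U i" unfolding xs_def Xs_def by (simp add: algebra_simps)
      have "norm (p i - xs i) \<le> norm (p i - Xs (\<gamma> n) i) + norm ((\<gamma> n - gs) *\<^sub>R U i)"
        unfolding eq by (rule norm_triangle_ineq)
      then show ?thesis by simp
    qed
    have "L2_set (\<lambda>i. norm (p i - xs i)) I \<le> L2_set (\<lambda>i. norm (p i - Xs (\<gamma> n) i) + \<bar>\<gamma> n - gs\<bar> * norm (U i)) I"
      by (rule L2_set_mono[OF pt norm_ge_zero])
    also have "\<dots> \<le> L2_set (\<lambda>i. norm (p i - Xs (\<gamma> n) i)) I + L2_set (\<lambda>i. \<bar>\<gamma> n - gs\<bar> * norm (U i)) I"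
      by (rule L2_set_triangle_ineq)
    also have "L2_set (\<lambda>i. \<bar>\<gamma> n - gs\<bar> * norm (U i)) I = \<bar>\<gamma> n - gs\<bar> * Unm"
      unfolding Unm_def by (rule L2_set_right_distrib[symmetric]) simp
    also have "\<bar>\<gamma> n - gs\<bar> * Unm \<le> Cg * qg ^ n * Unm" using Cg(4)[of n] Unm0 by (rule mult_right_mono)
    finally show ?thesis by simp
  qed
  have CU0: "0 \<le> Cg * Unm" using Cg Unm0 by simp
  have xrate: "rlinear_vec I x xs"
  proof -
    have "\<forall>n. L2_set (\<lambda>i. norm (x n i - xs i)) I \<le> M0 * \<rho> ^ n + (Cg * Unm) * qg ^ n"
    proof
      fix n
      have "L2_set (\<lambda>i. norm (x n i - xs i)) I \<le> e n + Cg * qg ^ n * Unm" using L2U[of "x n" n] unfolding e_def .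
      then show "L2_set (\<lambda>i. norm (x n i - xs i)) I \<le> M0 * \<rho> ^ n + (Cg * Unm) * qg ^ n"
        using eb[of n] by (simp add: mult_ac)
    qed
    then obtain C r where "C \<ge> 0" "0 < r" "r < 1" "\<forall>n. L2_set (\<lambda>i. norm (x n i - xs i)) I \<le> C * r ^ n"
      using rate_combine[of "\<lambda>n. L2_set (\<lambda>i. norm (x n i - xs i)) I" M0 \<rho> "Cg * Unm" qg] M00 CU0 rho Cg by blast
    then show ?thesis unfolding rlinear_vec_def L2_set_def by blast
  qed
  have wrate: "rlinear_vec I w xs"
  proof -
    have "\<forall>n. L2_set (\<lambda>i. norm (w n i - xs i)) I \<le> M0 * \<rho> ^ n + (Cg * Unm) * qg ^ n"
    proof
      fix n
      have "L2_set (\<lambda>i. norm (w n i - xs i)) I \<le> ew n + Cg * qg ^ n * Unm" using L2U[of "w n" n] unfolding ew_def .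
      moreover have "ew n \<le> e n"
      proof -
        have "\<rho> * e n \<le> 1 * e n" using rho e0[of n] by (intro mult_right_mono) auto
        then show ?thesis using contr[of n] by simp
      qed
      ultimately show "L2_set (\<lambda>i. norm (w n i - xs i)) I \<le> M0 * \<rho> ^ n + (Cg * Unm) * qg ^ n"
        using eb[of n] by (simp add: mult_ac)
    qed
    then obtain C r where "C \<ge> 0" "0 < r" "r < 1" "\<forall>n. L2_set (\<lambda>i. norm (w n i - xs i)) I \<le> C * r ^ n"
      using rate_combine[of "\<lambda>n. L2_set (\<lambda>i. norm (w n i - xs i)) I" M0 \<rho> "Cg * Unm" qg] M00 CU0 rho Cg by blast
    then show ?thesis unfolding rlinear_vec_def L2_set_def by blast
  qed
  have zrate: "rlinear_vec {1..N} z (\<lambda>_. resolvent gs (A 1) (xs 1))"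
  proof -
    define Cz where "Cz = real N * real (2 * N)"
    have Cz0: "0 \<le> Cz" unfolding Cz_def by simp
    have "\<forall>n. L2_set (\<lambda>i. norm (z n i - zs)) {1..N} \<le> (Cz * M0) * \<rho> ^ n + 0 * qg ^ n"
    proof
      fix n
      have "L2_set (\<lambda>i. norm (z n i - zs)) {1..N} \<le> L2_set (\<lambda>i. real (2 * N) * e n) {1..N}"
        by (rule L2_set_mono[OF zb norm_ge_zero])
      also have "\<dots> = sqrt (real N) * (real (2 * N) * e n)" using e0[of n] by (simp add: L2_set_constant)
      also have "\<dots> \<le> real N * (real (2 * N) * e n)"
      proof (rule mult_right_mono)
        have "real N \<le> (real N)\<^sup>2" using N2 by (simp add: power2_eq_square)
        then have "sqrt (real N) \<le> sqrt ((real N)\<^sup>2)" by (rule real_sqrt_le_mono)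
        then show "sqrt (real N) \<le> real N" by simp
      qed (use e0[of n] in simp)
      also have "\<dots> \<le> real N * (real (2 * N) * (M0 * \<rho> ^ n))"
        using eb[of n] by (intro mult_left_mono) auto
      finally show "L2_set (\<lambda>i. norm (z n i - zs)) {1..N} \<le> (Cz * M0) * \<rho> ^ n + 0 * qg ^ n"
        unfolding Cz_def by (simp add: mult_ac)
    qed
    then obtain C r where "C \<ge> 0" "0 < r" "r < 1" "\<forall>n. L2_set (\<lambda>i. norm (z n i - zs)) {1..N} \<le> C * r ^ n"
      using rate_combine[of "\<lambda>n. L2_set (\<lambda>i. norm (z n i - zs)) {1..N}" "Cz * M0" \<rho> 0 qg] M00 Cz0 rho Cg by auto
    then show ?thesis unfolding rlinear_vec_def L2_set_def zsJ by blast
  qed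
  have mzz: "mt_zz A gs xs j = zs" if "1 \<le> j" "j \<le> N - 1" for j
    using that
  proof (induction j rule: nat_induct_at_least)
    case base then show ?case using zsJ by simp
  next
    case (Suc j)
    then obtain k where k: "j = Suc k" using not0_implies_Suc by fastforce
    have sj: "Suc j \<in> {2..N-1}" using Suc by auto
    have sjI: "Suc j \<in> I" using sj unfolding I_def by auto
    have Ae: "A (Suc j) = sv (F (Suc j))" using A_i[OF iN[OF sjI]] .
    have "mt_zz A gs xs (Suc j) = resolvent gs (A (Suc j)) (mt_zz A gs xs j + xs (Suc j) - xs j)"
      unfolding k by simp
    also have "mt_zz A gs xs j = zs" using Suc by simp
    also have "resolvent gs (A (Suc j)) (zs + xs (Suc j) - xs j) = zs"
      unfolding Ae xs_def using FPi[OF sj, of gs]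
      by (intro res_unique[OF monF[OF sjI] gs_pos]) (auto simp: sv_def algebra_simps)
    finally show ?case .
  qed
  have mz: "mt_z N A gs xs i = zs" if "1 \<le> i" "i \<le> N" for i
  proof (cases "i = N")
    case True
    have "mt_z N A gs xs N = resolvent gs B (zs + zs - xs (N - 1))"
      unfolding mt_z_def A_N using mzz[of 1] mzz[of "N-1"] N2 by simp
    also have "\<dots> = zs" unfolding xs_def using FPN[of gs]
      by (intro res_unique[OF monB gs_pos uN]) simp
    finally show ?thesis using True by simp
  next
    case False
    then show ?thesis unfolding mt_z_def using mzz that by simp
  qed
  have fixp: "xs \<in> mt_fix N A gs \<theta>"
    unfolding mt_fix_def mt_op_def using mz by auto
  have zzer: "resolvent gs (A 1) (xs 1) \<in> zer (opsum N A)" unfolding zsJ by (rule zs)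
  show ?thesis using fixp xrate wrate zrate zzer unfolding I_def by blast
qed

end
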